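(* Let $n>10$, $S=\{1,2,4\}\subset\mathbb Z_n$, and $\mathbb K$ a field of characteristic $0$ containing the $n$-th roots of unity. For every $m\ge2$ and every $\lambda$ with $\lambda^n=1$, the restricted boundary $\partial_m:\Omega_m^{(\lambda)}(\vec C_n^{1,2,4})\to\Omega_{m-1}^{(\lambda)}(\vec C_n^{1,2,4})$ has rank exactly $m$.
   Context: GLMY path complex over a field $\mathbb K$ of characteristic $0$: elementary paths $e_{v_0\cdots v_n}$, boundary $\partial e_{v_0\cdots v_n}=\sum_{j}(-1)^j e_{v_0\cdots\widehat{v_j}\cdots v_n}$, paths with two equal consecutive vertices set to $0$; $A_n(G)$ = span of paths along arrows of $G$; $\Omega_0=A_0$, $\Omega_1=A_1$, $\Omega_n=\{u\in A_n:\partial u\in A_{n-1}\}$. The circulant digraph $\vec{C}_n^S$ has vertex set $\mathbb Z_n$ and arrows $a\to a+s$, $s\in S$. $\tau$ is the chain automorphism induced by $a\mapsto a+1$ and $\Omega_m^{(\lambda)}=\{\alpha\in\Omega_m:\tau\alpha=\lambda\alpha\}$. *)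

theory Defs
  imports Complex_Main "HOL-Library.Function_Algebras"
begin

text \<open>GLMY path complex of the circulant digraph on Z_n (vertices 0..n-1), arrows a -> (a+s) mod n
  for s in S. Elementary paths are nat lists; chains are functions from paths to the field
  (coefficient of each elementary path).\<close>

definition circ_arrow :: "nat \<Rightarrow> nat set \<Rightarrow> nat \<Rightarrow> nat \<Rightarrow> bool" where
  "circ_arrow n S a b \<longleftrightarrow> a < n \<and> b < n \<and> (\<exists>s\<in>S. b = (a + s) mod n)"

definition allowed_path :: "nat \<Rightarrow> nat set \<Rightarrow> nat list \<Rightarrow> bool" where
  "allowed_path n S p \<longleftrightarrow> p \<noteq> [] \<and> set p \<subseteq> {..<n} \<and>
     (\<forall>i. Suc i < length p \<longrightarrow> circ_arrow n S (p ! i) (p ! Suc i))"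

definition regular_path :: "nat list \<Rightarrow> bool" where
  "regular_path p \<longleftrightarrow> (\<forall>i. Suc i < length p \<longrightarrow> p ! i \<noteq> p ! Suc i)"

definition paths_len :: "nat \<Rightarrow> nat \<Rightarrow> nat list set" where
  "paths_len n k = {p. length p = k \<and> set p \<subseteq> {..<n}}"

definition del_vertex :: "nat \<Rightarrow> nat list \<Rightarrow> nat list" where
  "del_vertex j p = take j p @ drop (Suc j) p"

definition path_bd :: "nat \<Rightarrow> (nat list \<Rightarrow> 'k::field) \<Rightarrow> nat list \<Rightarrow> 'k" where
  "path_bd n u q = (if regular_path q then
      (\<Sum>p\<in>paths_len n (Suc (length q)). \<Sum>j<length p.
          if del_vertex j p = q then (-1) ^ j * u p else 0)
    else 0)"

definition A_space :: "nat \<Rightarrow> nat set \<Rightarrow> nat \<Rightarrow> (nat list \<Rightarrow> 'k::field) set" where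
  "A_space n S m = {u. \<forall>p. u p \<noteq> 0 \<longrightarrow> allowed_path n S p \<and> length p = Suc m}"

definition Omega_space :: "nat \<Rightarrow> nat set \<Rightarrow> nat \<Rightarrow> (nat list \<Rightarrow> 'k::field) set" where
  "Omega_space n S m = {u \<in> A_space n S m. m \<le> 1 \<or> path_bd n u \<in> A_space n S (m - 1)}"

text \<open>tau: the chain map induced by a -> a+1, i.e. tau e_p = e_(p+1).\<close>
definition tau_shift :: "nat \<Rightarrow> (nat list \<Rightarrow> 'k::field) \<Rightarrow> nat list \<Rightarrow> 'k" where
  "tau_shift n u q = (if set q \<subseteq> {..<n} then u (map (\<lambda>v. (v + n - 1) mod n) q) else 0)"

definition Omega_eig :: "nat \<Rightarrow> nat set \<Rightarrow> nat \<Rightarrow> 'k::field \<Rightarrow> (nat list \<Rightarrow> 'k) set" where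
  "Omega_eig n S m lam = {u \<in> Omega_space n S m. tau_shift n u = (\<lambda>q. lam * u q)}"

definition chain_scale :: "'k::field \<Rightarrow> (nat list \<Rightarrow> 'k) \<Rightarrow> nat list \<Rightarrow> 'k" where
  "chain_scale c u = (\<lambda>q. c * u q)"

end

theory Submission
  imports Defs "HOL-Library.Multiset"
begin


fun pth :: "nat \<Rightarrow> nat \<Rightarrow> nat list \<Rightarrow> nat list" where
  "pth n a [] = [a]"
| "pth n a (s # w) = a # pth n ((a + s) mod n) w"

fun stp :: "nat \<Rightarrow> nat list \<Rightarrow> nat list" where
  "stp n (x # y # r) = ((y + n - x) mod n) # stp n (y # r)"
| "stp n _ = []"

lemma pth_length[simp]: "length (pth n a w) = Suc (length w)"
  by (induction w arbitrary: a) auto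

lemma pth_ne[simp]: "pth n a w \<noteq> []"
  by (cases w) auto

lemma pth_hd[simp]: "hd (pth n a w) = a"
  by (cases w) auto

lemma pth_Cons: "pth n a w = a # tl (pth n a w)"
  by (cases w) auto

lemma pth_set: "0 < n \<Longrightarrow> a < n \<Longrightarrow> set (pth n a w) \<subseteq> {..<n}"
  by (induction w arbitrary: a) auto

lemma pth_nth0[simp]: "pth n a w ! 0 = a"
  by (cases w) auto

lemma pth_nth_Suc: "i < length w \<Longrightarrow> pth n a w ! Suc i = (pth n a w ! i + w ! i) mod n"
proof (induction w arbitrary: a i)
  case Nil then show ?case by simp
next
  case (Cons s w)
  show ?case
  proof (cases i)
    case 0 then show ?thesis by (cases w) auto
  next
    case (Suc j) then show ?thesis using Cons by auto
  qed
qed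

lemma pth_append: "pth n a (w1 @ w2) = pth n a w1 @ tl (pth n (last (pth n a w1)) w2)"
proof (induction w1 arbitrary: a)
  case Nil then show ?case by (cases w2) auto
next
  case (Cons s w1) then show ?case by (cases w1) auto
qed

lemma pth_last_lt: "0 < n \<Longrightarrow> a < n \<Longrightarrow> last (pth n a w) < n"
proof -
  assume "0 < n" "a < n"
  moreover have "last (pth n a w) \<in> set (pth n a w)" by simp
  ultimately show ?thesis using pth_set[of n a w] by blast
qed

lemma stp_length: "length (stp n p) = length p - 1"
  by (induction n p rule: stp.induct) auto

lemma stp_set: "0 < n \<Longrightarrow> set (stp n p) \<subseteq> {..<n}"
  by (induction n p rule: stp.induct) auto

lemma pth_stp: "set p \<subseteq> {..<n} \<Longrightarrow> p \<noteq> [] \<Longrightarrow> pth n (hd p) (stp n p) = p"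
proof (induction n p rule: stp.induct)
  case (1 n x y r)
  have xy: "x < n" "y < n" using 1 by auto
  have "(x + (y + n - x) mod n) mod n = y"
  proof -
    have "(x + (y + n - x) mod n) mod n = (x + (y + n - x)) mod n" by (simp add: mod_add_right_eq)
    also have "x + (y + n - x) = y + n" using xy by simp
    finally show ?thesis using xy by simp
  qed
  then show ?case using 1 by auto
next
  case ("2_1" n) then show ?case by simp
next
  case ("2_2" n v) then show ?case by simp
qed

lemma stp_pth: "a < n \<Longrightarrow> set w \<subseteq> {..<n} \<Longrightarrow> stp n (pth n a w) = w"
proof (induction w arbitrary: a)
  case Nil then show ?case by simp
next
  case (Cons s w)
  have n: "0 < n" using Cons by auto
  have "((a + s) mod n + n - a) mod n = s"
  proof -
    have "((a + s) mod n + n - a) mod n = ((a + s) mod n + (n - a)) mod n" using Cons by simp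
    also have "\<dots> = ((a + s) + (n - a)) mod n" by (simp add: mod_add_left_eq)
    also have "(a + s) + (n - a) = s + n" using Cons by simp
    finally show ?thesis using Cons by simp
  qed
  moreover have "stp n (pth n a (s # w)) = ((a + s) mod n + n - a) mod n # stp n (pth n ((a + s) mod n) w)"
  proof -
    have "stp n (pth n a (s # w)) = stp n (a # ((a+s) mod n) # tl (pth n ((a+s) mod n) w))"
      by (metis pth.simps(2) pth_Cons)
    also have "\<dots> = ((a + s) mod n + n - a) mod n # stp n (pth n ((a+s) mod n) w)"
      by (metis stp.simps(1) pth_Cons)
    finally show ?thesis .
  qed
  ultimately show ?case using Cons n by simp
qed

definition SS :: "nat set" where "SS = {1, 2, 4}"

lemma mod_cancel_aux: "s \<le> t \<Longrightarrow> t < (n::nat) \<Longrightarrow> (v + t) mod n = (v + s) mod n \<Longrightarrow> t = s"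
proof -
  assume a: "s \<le> t" "t < n" "(v + t) mod n = (v + s) mod n"
  then have "n dvd (v + t) - (v + s)" using mod_eq_dvd_iff_nat[of "v+s" "v+t" n] by simp
  then have "n dvd t - s" by simp
  moreover have "t - s < n" using a by simp
  ultimately have "t - s = 0" using dvd_imp_le by fastforce
  then show ?thesis using a by simp
qed

lemma mod_cancel_lt: "s < n \<Longrightarrow> t < (n::nat) \<Longrightarrow> (v + t) mod n = (v + s) mod n \<Longrightarrow> t = s"
  by (metis mod_cancel_aux nat_le_linear)

lemma allowed_pth:
  assumes n: "n > 10" and a: "a < n" and w: "set w \<subseteq> {..<n}"
  shows "allowed_path n SS (pth n a w) \<longleftrightarrow> set w \<subseteq> SS"
proof -
  have n0: "0 < n" using n by simp
  have arr: "circ_arrow n SS (pth n a w ! i) (pth n a w ! Suc i) \<longleftrightarrow> w ! i \<in> SS" if i: "i < length w" for i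
  proof -
    have "pth n a w ! i \<in> set (pth n a w)" using i by (simp add: nth_mem)
    then have v: "pth n a w ! i < n" using pth_set[OF n0 a, of w] by blast
    have wi: "w ! i < n" using w i by (auto simp: set_conv_nth)
    have S: "\<forall>s\<in>SS. s < n" using n by (auto simp: SS_def)
    show ?thesis
      unfolding circ_arrow_def pth_nth_Suc[OF i]
      using v wi S mod_cancel_lt[of _ n "w ! i" "pth n a w ! i"] by auto
  qed
  have "allowed_path n SS (pth n a w) \<longleftrightarrow> (\<forall>i. Suc i < length (pth n a w) \<longrightarrow> circ_arrow n SS (pth n a w ! i) (pth n a w ! Suc i))"
    unfolding allowed_path_def using pth_set[OF n0 a] by auto
  also have "\<dots> \<longleftrightarrow> (\<forall>i<length w. w ! i \<in> SS)" using arr by auto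
  also have "\<dots> \<longleftrightarrow> set w \<subseteq> SS" by (auto simp: set_conv_nth)
  finally show ?thesis .
qed

lemma regular_pth:
  assumes "\<forall>x\<in>set w. 0 < x \<and> x < n"
  shows "regular_path (pth n a w)"
  unfolding regular_path_def
proof (intro allI impI)
  fix i assume i: "Suc i < length (pth n a w)"
  then have i': "i < length w" by simp
  have wi: "0 < w ! i" "w ! i < n" using assms i' by (auto simp: set_conv_nth)
  show "pth n a w ! i \<noteq> pth n a w ! Suc i"
  proof
    assume eq: "pth n a w ! i = pth n a w ! Suc i"
    have v: "pth n a w ! i < n" using eq pth_nth_Suc[OF i'] wi by (metis mod_less_divisor gr_zeroI less_zeroE)
    have "(pth n a w ! i + w ! i) mod n = (pth n a w ! i + 0) mod n"
      using eq pth_nth_Suc[OF i'] v by simp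
    then have "w ! i = 0" using mod_cancel_lt[of 0 n "w ! i"] wi by simp
    then show False using wi by simp
  qed
qed


definition ins :: "nat \<Rightarrow> nat \<Rightarrow> nat list \<Rightarrow> nat list" where
  "ins j x q = take j q @ x # drop j q"

lemma ins_length[simp]: "j \<le> length q \<Longrightarrow> length (ins j x q) = Suc (length q)"
  by (simp add: ins_def)

lemma ins_nth: "j \<le> length q \<Longrightarrow> ins j x q ! j = x"
  by (simp add: ins_def nth_append)

lemma del_ins: "j \<le> length q \<Longrightarrow> del_vertex j (ins j x q) = q"
  by (simp add: ins_def del_vertex_def)

lemma ins_del: "j < length p \<Longrightarrow> ins j (p ! j) (del_vertex j p) = p"
  by (simp add: ins_def del_vertex_def min_def id_take_nth_drop[symmetric])

lemma ins_set: "set (ins j x q) \<subseteq> insert x (set q)"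
  by (auto simp: ins_def dest: in_set_takeD in_set_dropD)

lemma finite_paths_len: "finite (paths_len n k)"
proof -
  have "paths_len n k = {xs. set xs \<subseteq> {..<n} \<and> length xs = k}" by (auto simp: paths_len_def)
  then show ?thesis using finite_lists_length_eq[of "{..<n}" k] by simp
qed

lemma del_set: "set (del_vertex j p) \<subseteq> set p"
  by (auto simp: del_vertex_def dest: in_set_takeD in_set_dropD)

lemma path_bd_out:
  assumes "\<not> set q \<subseteq> {..<n}"
  shows "path_bd n u q = 0"
proof -
  have "\<And>p j. p \<in> paths_len n (Suc (length q)) \<Longrightarrow> del_vertex j p \<noteq> q"
    using assms del_set unfolding paths_len_def by blast
  then show ?thesis unfolding path_bd_def by simp
qed

lemma path_bd_formula:
  fixes u :: "nat list \<Rightarrow> 'k::field"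
  assumes q: "set q \<subseteq> {..<n}"
  shows "path_bd n u q = (if regular_path q then
     (\<Sum>j<Suc (length q). \<Sum>x<n. (-1) ^ j * u (ins j x q)) else 0)"
proof (cases "regular_path q")
  case False then show ?thesis by (simp add: path_bd_def)
next
  case True
  let ?P = "paths_len n (Suc (length q))"
  have "(\<Sum>p\<in>?P. \<Sum>j<length p. if del_vertex j p = q then (-1) ^ j * u p else 0)
      = (\<Sum>p\<in>?P. \<Sum>j<Suc (length q). if del_vertex j p = q then (-1) ^ j * u p else 0)"
    by (rule sum.cong) (auto simp: paths_len_def)
  also have "\<dots> = (\<Sum>j<Suc (length q). \<Sum>p\<in>?P. if del_vertex j p = q then (-1) ^ j * u p else 0)"
    by (rule sum.swap)
  also have "\<dots> = (\<Sum>j<Suc (length q). \<Sum>x<n. (-1) ^ j * u (ins j x q))"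
  proof (rule sum.cong[OF refl])
    fix j assume j: "j \<in> {..<Suc (length q)}"
    then have jq: "j \<le> length q" by simp
    have "(\<Sum>p\<in>?P. if del_vertex j p = q then (-1) ^ j * u p else 0)
        = (\<Sum>p\<in>{p\<in>?P. del_vertex j p = q}. (-1) ^ j * u p)"
      by (simp add: sum.inter_filter[OF finite_paths_len])
    also have "{p\<in>?P. del_vertex j p = q} = (\<lambda>x. ins j x q) ` {..<n}"
    proof
      show "{p\<in>?P. del_vertex j p = q} \<subseteq> (\<lambda>x. ins j x q) ` {..<n}"
      proof
        fix p assume p: "p \<in> {p\<in>?P. del_vertex j p = q}"
        then have pl: "length p = Suc (length q)" and ps: "set p \<subseteq> {..<n}" and d: "del_vertex j p = q"
          by (auto simp: paths_len_def)
        have jp: "j < length p" using pl jq by simp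
        have "p = ins j (p ! j) q" using ins_del[OF jp] d by simp
        moreover have "p ! j < n" using ps jp nth_mem by blast
        ultimately show "p \<in> (\<lambda>x. ins j x q) ` {..<n}" by blast
      qed
    next
      show "(\<lambda>x. ins j x q) ` {..<n} \<subseteq> {p\<in>?P. del_vertex j p = q}"
        using ins_set[of j _ q] q jq del_ins[OF jq] by (auto simp: paths_len_def)
    qed
    also have "(\<Sum>p\<in>(\<lambda>x. ins j x q) ` {..<n}. (-1) ^ j * u p) = (\<Sum>x<n. (-1) ^ j * u (ins j x q))"
    proof (rule sum.reindex_cong[where l="\<lambda>x. ins j x q"])
      show "inj_on (\<lambda>x. ins j x q) {..<n}"
        by (rule inj_onI) (metis ins_nth[OF jq])
    qed auto
    finally show "(\<Sum>p\<in>?P. if del_vertex j p = q then (-1) ^ j * u p else 0) = (\<Sum>x<n. (-1) ^ j * u (ins j x q))" .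
  qed
  finally show ?thesis using True by (simp add: path_bd_def)
qed


definition sub :: "nat \<Rightarrow> nat \<Rightarrow> nat \<Rightarrow> nat" where
  "sub n t s = (t + n - s) mod n"

definition Dw :: "nat \<Rightarrow> 'k::field \<Rightarrow> (nat list \<Rightarrow> 'k) \<Rightarrow> nat list \<Rightarrow> 'k" where
  "Dw n lam U w = (\<Sum>s\<in>SS. lam ^ s * U (s # w))
     + (\<Sum>i<length w. (-1) ^ Suc i * (\<Sum>s\<in>SS. U (take i w @ s # sub n (w ! i) s # drop (Suc i) w)))
     + (-1) ^ Suc (length w) * (\<Sum>s\<in>SS. U (w @ [s]))"

lemma modA: "e \<le> n \<Longrightarrow> ((e + s) mod n + n - e) mod (n::nat) = s mod n"
proof -
  assume e: "e \<le> n"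
  have "((e + s) mod n + n - e) = ((e + s) mod n + (n - e))" using e by simp
  then have "((e + s) mod n + n - e) mod n = ((e + s) + (n - e)) mod n" by (simp add: mod_add_left_eq)
  also have "(e + s) + (n - e) = s + n" using e by simp
  finally show ?thesis by simp
qed

lemma modA': "e < n \<Longrightarrow> x < n \<Longrightarrow> (e + (x + n - e) mod n) mod (n::nat) = x"
proof -
  assume a: "e < n" "x < n"
  have "(e + (x + n - e) mod n) mod n = (e + (x + n - e)) mod n" by (simp add: mod_add_right_eq)
  also have "e + (x + n - e) = x + n" using a by simp
  finally show ?thesis using a by simp
qed

lemma modB: "a < n \<Longrightarrow> x < n \<Longrightarrow> (a + n - (a + n - x) mod n) mod (n::nat) = x"
proof (cases "x \<le> a")
  case True
  assume a: "a < n" "x < n"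
  have "(a + n - x) mod n = a - x" using True a
    by (metis Nat.add_diff_assoc2 diff_le_self le_less_trans mod_add_self2 mod_less)
  then show ?thesis using True a by (simp add: le_add_diff)
next
  case False
  assume a: "a < n" "x < n"
  have "(a + n - x) mod n = a + n - x" using False a by simp
  then show ?thesis using False a by simp
qed

lemma modC: "a < n \<Longrightarrow> s < n \<Longrightarrow> ((a + n - s) mod n + s) mod (n::nat) = a"
proof -
  assume a: "a < n" "s < n"
  have "((a + n - s) mod n + s) mod n = ((a + n - s) + s) mod n" by (simp add: mod_add_left_eq)
  also have "(a + n - s) + s = a + n" using a by simp
  finally show ?thesis using a by simp
qed

lemma sum_reindex_a: "a < n \<Longrightarrow> (\<Sum>x<n. f x) = (\<Sum>s<(n::nat). f ((a + n - s) mod n))"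
  by (rule sum.reindex_bij_witness[where i="\<lambda>s. (a + n - s) mod n" and j="\<lambda>x. (a + n - x) mod n"])
     (auto simp: modB)

lemma sum_reindex_b: "e < n \<Longrightarrow> (\<Sum>x<n. f x) = (\<Sum>s<(n::nat). f ((e + s) mod n))"
  by (rule sum.reindex_bij_witness[where i="\<lambda>s. (e + s) mod n" and j="\<lambda>x. (x + n - e) mod n"])
     (auto simp: modA modA')

lemma SS_lt: "n > 10 \<Longrightarrow> SS \<subseteq> {..<n}"
  by (auto simp: SS_def)

lemma sum_restrict_SS:
  assumes "n > 10" "\<And>s. s \<notin> SS \<Longrightarrow> f s = 0"
  shows "(\<Sum>s<n. f s) = (\<Sum>s\<in>SS. f s)"
  by (rule sum.mono_neutral_right) (use assms SS_lt in auto)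

lemma pow_mod_n: "(z::'k::field) ^ n = 1 \<Longrightarrow> z ^ m = z ^ (m mod n)"
proof -
  assume z: "z ^ n = 1"
  have "z ^ m = z ^ (n * (m div n) + m mod n)" by simp
  also have "\<dots> = (z ^ n) ^ (m div n) * z ^ (m mod n)" by (simp only: power_add power_mult)
  finally show ?thesis using z by simp
qed

lemma zeta_front:
  fixes lam :: "'k::field"
  assumes lam: "lam ^ n = 1" and a: "a < n" and s: "s < n"
  shows "inverse lam ^ ((a + n - s) mod n) = inverse lam ^ a * lam ^ s"
proof -
  let ?z = "inverse lam"
  have z: "?z ^ n = 1" using lam by (simp add: power_inverse)
  have l0: "lam \<noteq> 0" using lam a by (metis gr_implies_not0 power_0_left zero_neq_one)
  have "?z ^ ((a + n - s) mod n) * ?z ^ s = ?z ^ (((a + n - s) mod n + s))" by (simp add: power_add)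
  also have "\<dots> = ?z ^ a" using pow_mod_n[OF z, of "(a + n - s) mod n + s"] modC[OF a s] by simp
  finally have "?z ^ ((a + n - s) mod n) * ?z ^ s * lam ^ s = ?z ^ a * lam ^ s" by simp
  moreover have "?z ^ s * lam ^ s = 1" using l0 by (simp add: power_inverse[symmetric] power_mult_distrib[symmetric])
  ultimately show ?thesis by (simp add: mult.assoc)
qed

lemma pth_ins_internal:
  assumes n: "0 < n" and a: "a < n" and i: "i < length w" and s: "s < n"
    and e: "e = last (pth n a (take i w))"
  shows "ins (Suc i) ((e + s) mod n) (pth n a w) = pth n a (take i w @ s # sub n (w ! i) s # drop (Suc i) w)"
proof -
  let ?al = "take i w" and ?t = "w ! i" and ?be = "drop (Suc i) w"
  have w: "w = ?al @ ?t # ?be" using i by (simp add: id_take_nth_drop)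
  have q: "pth n a w = pth n a ?al @ pth n ((e + ?t) mod n) ?be"
    by (subst w, subst pth_append) (simp add: e[symmetric])
  have la: "length (pth n a ?al) = Suc i" using i by simp
  have lhs: "ins (Suc i) ((e + s) mod n) (pth n a w) = pth n a ?al @ ((e + s) mod n) # pth n ((e + ?t) mod n) ?be"
    unfolding ins_def q using la by simp
  have key: "((e + s) mod n + sub n ?t s) mod n = (e + ?t) mod n"
  proof -
    have "((e + s) mod n + sub n ?t s) mod n = ((e + s) + (?t + n - s)) mod n"
      unfolding sub_def by (simp add: mod_add_eq)
    also have "(e + s) + (?t + n - s) = (e + ?t) + n" using s by simp
    finally show ?thesis by simp
  qed
  have "pth n a (?al @ s # sub n ?t s # ?be) = pth n a ?al @ ((e + s) mod n) # pth n (((e + s) mod n + sub n ?t s) mod n) ?be"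
    by (subst pth_append) (simp add: e[symmetric])
  then show ?thesis using lhs key by simp
qed

lemma path_bd_word:
  fixes u :: "nat list \<Rightarrow> 'k::field" and lam :: 'k
  assumes n: "n > 10" and lam: "lam ^ n = 1"
    and Usupp: "\<And>w. U w \<noteq> 0 \<Longrightarrow> set w \<subseteq> SS"
    and eig: "\<And>a w. a < n \<Longrightarrow> set w \<subseteq> {..<n} \<Longrightarrow> u (pth n a w) = inverse lam ^ a * U w"
    and a: "a < n" and w: "\<forall>x\<in>set w. 0 < x \<and> x < n"
  shows "path_bd n u (pth n a w) = inverse lam ^ a * Dw n lam U w"
proof -
  let ?z = "inverse lam"
  let ?q = "pth n a w"
  let ?L = "length w"
  have n0: "0 < n" using n by simp
  have qs: "set ?q \<subseteq> {..<n}" using pth_set[OF n0 a] .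
  have qr: "regular_path ?q" using regular_pth[OF w] .
  have ws: "set w \<subseteq> {..<n}" using w by auto
  define T where "T j = (\<Sum>x<n. (-1) ^ j * u (ins j x ?q))" for j
  have "path_bd n u ?q = (\<Sum>j<Suc (Suc ?L). T j)"
    using path_bd_formula[OF qs] qr by (simp add: T_def)
  also have "\<dots> = T 0 + (\<Sum>i<Suc ?L. T (Suc i))" by (rule sum.lessThan_Suc_shift)
  also have "\<dots> = T 0 + (\<Sum>i<?L. T (Suc i)) + T (Suc ?L)" by simp
  finally have bd: "path_bd n u ?q = T 0 + (\<Sum>i<?L. T (Suc i)) + T (Suc ?L)" .
  have T0: "T 0 = ?z ^ a * (\<Sum>s\<in>SS. lam ^ s * U (s # w))"
  proof -
    have "T 0 = (\<Sum>x<n. u (x # ?q))" by (simp add: T_def ins_def)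
    also have "\<dots> = (\<Sum>s<n. u (((a + n - s) mod n) # ?q))" by (rule sum_reindex_a[OF a])
    also have "\<dots> = (\<Sum>s<n. ?z ^ a * (lam ^ s * U (s # w)))"
    proof (rule sum.cong[OF refl])
      fix s assume "s \<in> {..<n}"
      then have s: "s < n" by simp
      have "((a + n - s) mod n) # ?q = pth n ((a + n - s) mod n) (s # w)"
        using modC[OF a s] by simp
      then have "u (((a + n - s) mod n) # ?q) = ?z ^ ((a + n - s) mod n) * U (s # w)"
        using eig[of "(a + n - s) mod n" "s # w"] s ws n0 by simp
      then show "u (((a + n - s) mod n) # ?q) = ?z ^ a * (lam ^ s * U (s # w))"
        using zeta_front[OF lam a s] by simp
    qed
    also have "\<dots> = (\<Sum>s\<in>SS. ?z ^ a * (lam ^ s * U (s # w)))"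
      by (rule sum_restrict_SS[OF n]) (use Usupp in force)
    finally show ?thesis by (simp add: sum_distrib_left)
  qed
  have Ti: "T (Suc i) = ?z ^ a * ((-1) ^ Suc i * (\<Sum>s\<in>SS. U (take i w @ s # sub n (w ! i) s # drop (Suc i) w)))"
    if i: "i < ?L" for i
  proof -
    define e where "e = last (pth n a (take i w))"
    have e: "e < n" unfolding e_def by (rule pth_last_lt[OF n0 a])
    have "T (Suc i) = (-1) ^ Suc i * (\<Sum>x<n. u (ins (Suc i) x ?q))" by (simp add: T_def sum_distrib_left)
    also have "(\<Sum>x<n. u (ins (Suc i) x ?q)) = (\<Sum>s<n. u (ins (Suc i) ((e + s) mod n) ?q))"
      by (rule sum_reindex_b[OF e])
    also have "\<dots> = (\<Sum>s<n. ?z ^ a * U (take i w @ s # sub n (w ! i) s # drop (Suc i) w))"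
    proof (rule sum.cong[OF refl])
      fix s assume "s \<in> {..<n}"
      then have s: "s < n" by simp
      have st: "set (take i w @ s # sub n (w ! i) s # drop (Suc i) w) \<subseteq> {..<n}"
        using ws s n0 by (auto simp: sub_def dest: in_set_takeD in_set_dropD)
      show "u (ins (Suc i) ((e + s) mod n) ?q) = ?z ^ a * U (take i w @ s # sub n (w ! i) s # drop (Suc i) w)"
        using pth_ins_internal[OF n0 a i s e_def] eig[OF a st] by simp
    qed
    also have "\<dots> = (\<Sum>s\<in>SS. ?z ^ a * U (take i w @ s # sub n (w ! i) s # drop (Suc i) w))"
      by (rule sum_restrict_SS[OF n]) (use Usupp in force)
    finally show ?thesis by (simp add: sum_distrib_left mult.left_commute)
  qed
  have TL: "T (Suc ?L) = ?z ^ a * ((-1) ^ Suc ?L * (\<Sum>s\<in>SS. U (w @ [s])))"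
  proof -
    define e where "e = last ?q"
    have e: "e < n" unfolding e_def by (rule pth_last_lt[OF n0 a])
    have "T (Suc ?L) = (-1) ^ Suc ?L * (\<Sum>x<n. u (?q @ [x]))" by (simp add: T_def sum_distrib_left ins_def)
    also have "(\<Sum>x<n. u (?q @ [x])) = (\<Sum>s<n. u (?q @ [(e + s) mod n]))"
      by (rule sum_reindex_b[OF e])
    also have "\<dots> = (\<Sum>s<n. ?z ^ a * U (w @ [s]))"
    proof (rule sum.cong[OF refl])
      fix s assume "s \<in> {..<n}"
      then have s: "s < n" by simp
      have "?q @ [(e + s) mod n] = pth n a (w @ [s])" by (simp add: pth_append e_def)
      moreover have "set (w @ [s]) \<subseteq> {..<n}" using ws s by auto
      ultimately show "u (?q @ [(e + s) mod n]) = ?z ^ a * U (w @ [s])" using eig[OF a] by simp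
    qed
    also have "\<dots> = (\<Sum>s\<in>SS. ?z ^ a * U (w @ [s]))"
      by (rule sum_restrict_SS[OF n]) (use Usupp in force)
    finally show ?thesis by (simp add: sum_distrib_left mult.left_commute)
  qed
  have "(\<Sum>i<?L. T (Suc i)) = ?z ^ a * (\<Sum>i<?L. (-1) ^ Suc i * (\<Sum>s\<in>SS. U (take i w @ s # sub n (w ! i) s # drop (Suc i) w)))"
    by (simp add: Ti sum_distrib_left)
  then show ?thesis using bd T0 TL by (simp add: Dw_def distrib_left right_diff_distrib)
qed


definition R1 :: "(nat list \<Rightarrow> 'k::field) \<Rightarrow> bool" where
  "R1 V \<longleftrightarrow> (\<forall>al be x y. x \<in> SS \<longrightarrow> y \<in> SS \<longrightarrow> x \<noteq> y \<longrightarrow> V (al @ x # y # be) = - V (al @ y # x # be))"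

definition R2 :: "(nat list \<Rightarrow> 'k::field) \<Rightarrow> bool" where
  "R2 V \<longleftrightarrow> (\<forall>al be. V (al @ 4 # 4 # be) = 0)"

definition supp :: "(nat list \<Rightarrow> 'k::field) \<Rightarrow> bool" where
  "supp U \<longleftrightarrow> (\<forall>w. U w \<noteq> 0 \<longrightarrow> set w \<subseteq> SS)"

definition spl :: "nat \<Rightarrow> (nat list \<Rightarrow> 'k::field) \<Rightarrow> nat list \<Rightarrow> nat \<Rightarrow> nat list \<Rightarrow> 'k" where
  "spl n U al t be = (\<Sum>s\<in>SS. U (al @ s # sub n t s # be))"

lemma sum_SS: "(\<Sum>s\<in>SS. f s) = f 1 + f 2 + f 4"
  by (simp add: SS_def add.assoc)

lemma supp_zero: "supp U \<Longrightarrow> x \<notin> SS \<Longrightarrow> U (al @ x # be) = 0"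
  unfolding supp_def by auto

lemma supp_zero2: "supp U \<Longrightarrow> x \<notin> SS \<Longrightarrow> U (al @ s # x # be) = 0"
  using supp_zero[of U x "al @ [s]" be] by simp

lemma sub_vals:
  assumes n: "n > 10"
  shows "sub n 1 1 = 0" "sub n 1 2 = n - 1" "sub n 1 4 = n - 3"
    "sub n 2 1 = 1" "sub n 2 2 = 0" "sub n 2 4 = n - 2"
    "sub n 4 1 = 3" "sub n 4 2 = 2" "sub n 4 4 = 0"
    "sub n 3 1 = 2" "sub n 3 2 = 1" "sub n 3 4 = n - 1"
    "sub n 5 1 = 4" "sub n 5 2 = 3" "sub n 5 4 = 1"
    "sub n 6 1 = 5" "sub n 6 2 = 4" "sub n 6 4 = 2"
    "sub n 8 1 = 7" "sub n 8 2 = 6" "sub n 8 4 = 4"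
  using n by (simp_all add: sub_def mod_Suc)

lemma notSS: "n > 10 \<Longrightarrow> (0::nat) \<notin> SS \<and> 3 \<notin> SS \<and> 5 \<notin> SS \<and> 6 \<notin> SS \<and> 7 \<notin> SS \<and> n - 1 \<notin> SS \<and> n - 2 \<notin> SS \<and> n - 3 \<notin> SS"
  by (auto simp: SS_def)

lemma spl_vals:
  assumes n: "n > 10" and U: "supp U"
  shows "spl n U al 1 be = 0" "spl n U al 2 be = U (al @ 1 # 1 # be)" "spl n U al 4 be = U (al @ 2 # 2 # be)"
    "spl n U al 3 be = U (al @ 1 # 2 # be) + U (al @ 2 # 1 # be)"
    "spl n U al 5 be = U (al @ 1 # 4 # be) + U (al @ 4 # 1 # be)"
    "spl n U al 6 be = U (al @ 2 # 4 # be) + U (al @ 4 # 2 # be)"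
    "spl n U al 8 be = U (al @ 4 # 4 # be)"
  unfolding spl_def sum_SS using sub_vals[OF n] notSS[OF n] supp_zero2[OF U] by simp_all

lemma spl_1': "n > 10 \<Longrightarrow> supp U \<Longrightarrow> spl n U al (Suc 0) be = 0"
  using spl_vals(1) by simp

lemma sum_split_add: "(\<Sum>i<(a::nat) + b. f i) = (\<Sum>i<a. f i) + (\<Sum>k<b. f (a + k))"
  by (induction b) (simp_all add: add.assoc)

lemma sum_split_mid:
  "(\<Sum>i<length (al @ x # y # be). f i) = (\<Sum>i<length al. f i) + f (length al) + f (Suc (length al))
     + (\<Sum>k<length be. f (Suc (Suc (length al + k))))"
proof -
  have "length (al @ x # y # be) = (length al + 2) + length be" by simp
  then have "(\<Sum>i<length (al @ x # y # be). f i) = (\<Sum>i<length al + 2. f i) + (\<Sum>k<length be. f (length al + 2 + k))"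
    using sum_split_add by metis
  moreover have "\<And>k. length al + 2 + k = Suc (Suc (length al + k))" by simp
  moreover have "(\<Sum>i<length al + 2. f i) = (\<Sum>i<length al. f i) + f (length al) + f (Suc (length al))"
    by (simp add: numeral_2_eq_2)
  ultimately show ?thesis by simp
qed

definition gsp :: "nat \<Rightarrow> (nat list \<Rightarrow> 'k::field) \<Rightarrow> nat list \<Rightarrow> nat \<Rightarrow> 'k" where
  "gsp n U w i = spl n U (take i w) (w ! i) (drop (Suc i) w)"

lemma Dw_alt: "Dw n lam U w = (\<Sum>s\<in>SS. lam ^ s * U (s # w))
     + (\<Sum>i<length w. (-1) ^ Suc i * gsp n U w i)
     + (-1) ^ Suc (length w) * (\<Sum>s\<in>SS. U (w @ [s]))"
  by (simp add: Dw_def gsp_def spl_def)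

lemma gsp_left: "i < length al \<Longrightarrow> gsp n U (al @ x # y # be) i = spl n (\<lambda>v. U (v @ x # y # be)) (take i al) (al ! i) (drop (Suc i) al)"
  by (simp add: gsp_def spl_def nth_append)

lemma gsp_mid1: "gsp n U (al @ x # y # be) (length al) = spl n U al x (y # be)"
  by (simp add: gsp_def)

lemma gsp_mid2: "gsp n U (al @ x # y # be) (Suc (length al)) = spl n U (al @ [x]) y be"
proof -
  have "take (Suc (length al)) (al @ x # y # be) = al @ [x]" by simp
  moreover have "(al @ x # y # be) ! Suc (length al) = y" by (simp add: nth_append)
  moreover have "drop (Suc (Suc (length al))) (al @ x # y # be) = be" by simp
  ultimately show ?thesis by (simp add: gsp_def)
qed

lemma gsp_right: "k < length be \<Longrightarrow> gsp n U (al @ x # y # be) (Suc (Suc (length al + k))) = spl n (\<lambda>v. U (al @ x # y # v)) (take k be) (be ! k) (drop (Suc k) be)"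
proof -
  have t: "take (Suc (Suc (length al + k))) (al @ x # y # be) = al @ x # y # take k be" by simp
  have d: "drop (Suc (Suc (Suc (length al + k)))) (al @ x # y # be) = drop (Suc k) be" by (induction al) auto
  have nn: "(al @ x # y # be) ! (Suc (Suc (length al + k))) = be ! k" by (simp add: nth_append)
  show ?thesis unfolding gsp_def t d nn by (simp add: spl_def)
qed

lemma R1_D: "R1 U \<Longrightarrow> x \<in> SS \<Longrightarrow> y \<in> SS \<Longrightarrow> x \<noteq> y \<Longrightarrow> U (al @ x # y # be) = - U (al @ y # x # be)"
  unfolding R1_def by blast

lemma Dw_R1:
  assumes n: "n > 10" and U: "supp U" and r1: "R1 U" and xy: "x \<in> SS" "y \<in> SS" "x \<noteq> y"
  shows "Dw n lam U (al @ x # y # be) = - Dw n lam U (al @ y # x # be)"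
proof -
  let ?w1 = "al @ x # y # be" and ?w2 = "al @ y # x # be"
  have f1: "U (s # ?w1) = - U (s # ?w2)" for s using R1_D[OF r1 xy, of "s # al" be] by simp
  have b1: "U (?w1 @ [s]) = - U (?w2 @ [s])" for s using R1_D[OF r1 xy, of al "be @ [s]"] by simp
  have front: "(\<Sum>s\<in>SS. lam ^ s * U (s # ?w1)) = - (\<Sum>s\<in>SS. lam ^ s * U (s # ?w2))"
    unfolding sum_negf[symmetric] using f1 by (intro sum.cong) auto
  have bk: "(\<Sum>s\<in>SS. U (?w1 @ [s])) = - (\<Sum>s\<in>SS. U (?w2 @ [s]))"
    unfolding sum_negf[symmetric] using b1 by (intro sum.cong) auto
  have left: "gsp n U ?w1 i = - gsp n U ?w2 i" if "i < length al" for i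
  proof -
    have "U ((take i al @ s # sub n (al ! i) s # drop (Suc i) al) @ x # y # be)
        = - U ((take i al @ s # sub n (al ! i) s # drop (Suc i) al) @ y # x # be)" for s
      by (rule R1_D[OF r1 xy])
    then show ?thesis
      unfolding gsp_left[OF that] spl_def sum_negf[symmetric] by (intro sum.cong) auto
  qed
  have right: "gsp n U ?w1 (Suc (Suc (length al + k))) = - gsp n U ?w2 (Suc (Suc (length al + k)))" if "k < length be" for k
    unfolding gsp_right[OF that] spl_def sum_negf[symmetric]
    using R1_D[OF r1 xy] by (intro sum.cong) auto
  have mid: "spl n U al x (y # be) + spl n U al y (x # be) = spl n U (al @ [x]) y be + spl n U (al @ [y]) x be"
  proof -
    have S: "x \<in> {1,2,4}" "y \<in> {1,2,4}" using xy by (auto simp: SS_def)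
    have S12: "1 \<in> SS" "2 \<in> SS" "4 \<in> SS" "(1::nat) \<noteq> 2" "(1::nat) \<noteq> 4" "(2::nat) \<noteq> 4" by (auto simp: SS_def)
    note sv = spl_vals[OF n U]
    have e1: "U (al @ 1 # 2 # 2 # be) = U (al @ 2 # 2 # 1 # be)"
      using R1_D[OF r1 S12(1) S12(2) S12(4), of al "2 # be"] R1_D[OF r1 S12(1) S12(2) S12(4), of "al @ [2]" be] by simp
    have e2: "U (al @ 1 # 1 # 4 # be) = U (al @ 4 # 1 # 1 # be)"
      using R1_D[OF r1 S12(1) S12(3) S12(5), of "al @ [1]" be] R1_D[OF r1 S12(1) S12(3) S12(5), of al "1 # be"] by simp
    show ?thesis using S xy(3) e1 e2 by (auto simp: sv spl_1'[OF n U])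
  qed
  have intp: "(\<Sum>i<length ?w1. (-1) ^ Suc i * gsp n U ?w1 i) = - (\<Sum>i<length ?w2. (-1) ^ Suc i * gsp n U ?w2 i)"
  proof -
    have l: "length ?w2 = length ?w1" by simp
    have "(\<Sum>i<length ?w1. (-1) ^ Suc i * gsp n U ?w1 i) + (\<Sum>i<length ?w2. (-1) ^ Suc i * gsp n U ?w2 i)
        = (\<Sum>i<length ?w1. (-1) ^ Suc i * (gsp n U ?w1 i + gsp n U ?w2 i))"
      unfolding l sum.distrib[symmetric] by (simp only: distrib_left)
    also have "\<dots> = 0"
    proof -
      let ?f = "\<lambda>i. (-1) ^ Suc i * (gsp n U ?w1 i + gsp n U ?w2 i)"
      have "(\<Sum>i<length ?w1. ?f i) = (\<Sum>i<length al. ?f i) + ?f (length al) + ?f (Suc (length al))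
          + (\<Sum>k<length be. ?f (Suc (Suc (length al + k))))" by (rule sum_split_mid)
      moreover have "(\<Sum>i<length al. ?f i) = 0" using left by simp
      moreover have "(\<Sum>k<length be. ?f (Suc (Suc (length al + k)))) = 0" using right by simp
      moreover have "?f (length al) + ?f (Suc (length al)) = 0"
      proof -
        have a: "gsp n U ?w2 (length al) = spl n U al y (x # be)" by (rule gsp_mid1)
        have b: "gsp n U ?w2 (Suc (length al)) = spl n U (al @ [y]) x be" by (rule gsp_mid2)
        show ?thesis unfolding gsp_mid1 gsp_mid2 a b using mid
          by (simp add: algebra_simps)
      qed
      ultimately show ?thesis by simp
    qed
    finally show ?thesis by (simp only: eq_neg_iff_add_eq_0)
  qed
  show ?thesis unfolding Dw_alt using front bk intp by (simp add: algebra_simps)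
qed


lemma R2_D: "R2 U \<Longrightarrow> U (al @ 4 # 4 # be) = 0"
  unfolding R2_def by blast

lemma Dw_R2:
  assumes n: "n > 10" and U: "supp U" and r1: "R1 U" and r2: "R2 U"
  shows "Dw n lam U (al @ 4 # 4 # be) = 0"
proof -
  let ?w = "al @ 4 # 4 # be"
  have f1: "U (s # ?w) = 0" for s using R2_D[OF r2, of "s # al" be] by simp
  have b1: "U (?w @ [s]) = 0" for s using R2_D[OF r2, of al "be @ [s]"] by simp
  have left: "gsp n U ?w i = 0" if "i < length al" for i
  proof -
    have "U ((take i al @ s # sub n (al ! i) s # drop (Suc i) al) @ 4 # 4 # be) = 0" for s
      by (rule R2_D[OF r2])
    then show ?thesis unfolding gsp_left[OF that] spl_def by simp
  qed
  have right: "gsp n U ?w (Suc (Suc (length al + k))) = 0" if "k < length be" for k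
    unfolding gsp_right[OF that] spl_def using R2_D[OF r2] by simp
  have S: "2 \<in> SS" "4 \<in> SS" "(2::nat) \<noteq> 4" by (auto simp: SS_def)
  have e: "U (al @ 2 # 2 # 4 # be) = U (al @ 4 # 2 # 2 # be)"
    using R1_D[OF r1 S, of "al @ [2]" be] R1_D[OF r1 S, of al "2 # be"] by simp
  let ?f = "\<lambda>i. (-1) ^ Suc i * gsp n U ?w i"
  have "(\<Sum>i<length ?w. ?f i) = (\<Sum>i<length al. ?f i) + ?f (length al) + ?f (Suc (length al))
      + (\<Sum>k<length be. ?f (Suc (Suc (length al + k))))" by (rule sum_split_mid)
  also have "\<dots> = ?f (length al) + ?f (Suc (length al))" using left right by simp
  also have "\<dots> = 0" unfolding gsp_mid1 gsp_mid2 using e spl_vals(3)[OF n U] by simp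
  finally have "(\<Sum>i<length ?w. ?f i) = 0" .
  then show ?thesis unfolding Dw_alt using f1 b1 by simp
qed


definition rep :: "nat \<Rightarrow> nat \<Rightarrow> nat \<Rightarrow> nat list" where
  "rep a b k = replicate a 1 @ replicate b 2 @ replicate k 4"

fun inv :: "nat list \<Rightarrow> nat" where
  "inv [] = 0"
| "inv (x # w) = length (filter (\<lambda>y. y < x) w) + inv w"

lemma inv_swap: "y < x \<Longrightarrow> inv (al @ x # y # be) = Suc (inv (al @ y # x # be))"
proof (induction al)
  case Nil then show ?case by simp
next
  case (Cons z al)
  have "length (filter (\<lambda>v. v < z) (al @ x # y # be)) = length (filter (\<lambda>v. v < z) (al @ y # x # be))"
    by simp
  then show ?case using Cons by simp
qed

lemma count_list_replicate: "count_list (replicate a v) x = (if v = x then a else 0)"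
  by (induction a) auto

lemma rep_length[simp]: "length (rep a b k) = a + b + k"
  by (simp add: rep_def)

lemma rep_sorted: "sorted (rep a b k)"
  by (auto simp: rep_def sorted_append)

lemma sorted_SS_rep:
  assumes s: "sorted w" and w: "set w \<subseteq> SS"
  shows "w = rep (count_list w 1) (count_list w 2) (count_list w 4)"
proof -
  have "mset (rep (count_list w 1) (count_list w 2) (count_list w 4)) = mset w"
  proof (rule multiset_eqI)
    fix x
    show "count (mset (rep (count_list w 1) (count_list w 2) (count_list w 4))) x = count (mset w) x"
    proof (cases "x \<in> SS")
      case True then show ?thesis by (auto simp: SS_def rep_def count_mset count_list_replicate)
    next
      case False
      then have "x \<notin> set w" using w by auto
      then show ?thesis using False by (auto simp: SS_def rep_def count_mset count_list_replicate)
    qed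
  qed
  then have "sort w = rep (count_list w 1) (count_list w 2) (count_list w 4)"
    using properties_for_sort rep_sorted by blast
  then show ?thesis using sorted_sort_id[OF s] by simp
qed

lemma sort_zero:
  fixes V :: "nat list \<Rightarrow> 'k::field"
  assumes r1: "R1 V" and r2: "R2 V"
    and hyp: "\<And>a b k. k \<le> 1 \<Longrightarrow> a + b + k = L \<Longrightarrow> V (rep a b k) = 0"
  shows "set w \<subseteq> SS \<Longrightarrow> length w = L \<Longrightarrow> V w = 0"
proof (induction "inv w" arbitrary: w rule: less_induct)
  case less
  show ?case
  proof (cases "sorted w")
    case True
    let ?a = "count_list w 1" and ?b = "count_list w 2" and ?k = "count_list w 4"
    have w: "w = rep ?a ?b ?k" using sorted_SS_rep[OF True less.prems(1)] .
    have len: "?a + ?b + ?k = L" using less.prems(2) w rep_length by metis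
    show ?thesis
    proof (cases "?k \<le> 1")
      case True then show ?thesis using hyp len w by metis
    next
      case False
      then obtain j where j: "?k = j + 2" by (metis add.commute le_Suc_ex not_less_eq_eq one_add_one plus_1_eq_Suc)
      have "rep ?a ?b ?k = (replicate ?a 1 @ replicate ?b 2 @ replicate j 4) @ 4 # 4 # []"
        unfolding rep_def j by (simp only: replicate_add) (simp add: numeral_2_eq_2)
      then show ?thesis using w R2_D[OF r2] by metis
    qed
  next
    case False
    then obtain i where i: "Suc i < length w" "w ! i > w ! Suc i"
      unfolding sorted_iff_nth_Suc by (auto simp: not_le)
    obtain al x y be where wd: "w = al @ x # y # be" and yx: "y < x"
    proof -
      have "w = take i w @ w ! i # w ! Suc i # drop (Suc (Suc i)) w"
        using i(1) by (metis Cons_nth_drop_Suc Suc_lessD append_take_drop_id)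
      then show ?thesis using that i(2) by blast
    qed
    have xy: "x \<in> SS" "y \<in> SS" using less.prems(1) wd by auto
    have "V w = - V (al @ y # x # be)"
      using R1_D[OF r1 xy, of al be] yx wd by auto
    moreover have "V (al @ y # x # be) = 0"
    proof (rule less.hyps)
      show "inv (al @ y # x # be) < inv w" using inv_swap[OF yx, of al be] wd by simp
      show "set (al @ y # x # be) \<subseteq> SS" using less.prems(1) wd by auto
      show "length (al @ y # x # be) = L" using less.prems(2) wd by simp
    qed
    ultimately show ?thesis by simp
  qed
qed


lemma mv1:
  assumes r1: "R1 U" and xy: "x \<in> SS" "y \<in> SS" "x \<noteq> y"
  shows "U (al @ x # replicate r y @ be) = (-1) ^ r * U (al @ replicate r y @ x # be)"
proof (induction r arbitrary: al)
  case 0 then show ?case by simp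
next
  case (Suc r)
  have "U (al @ x # replicate (Suc r) y @ be) = - U (al @ y # x # replicate r y @ be)"
    using R1_D[OF r1 xy, of al "replicate r y @ be"] by simp
  also have "U (al @ y # x # replicate r y @ be) = U ((al @ [y]) @ x # replicate r y @ be)" by simp
  also have "\<dots> = (-1) ^ r * U ((al @ [y]) @ replicate r y @ x # be)" by (rule Suc.IH)
  also have "(al @ [y]) @ replicate r y @ x # be = al @ replicate (Suc r) y @ x # be"
    by (simp add: replicate_append_same[symmetric])
  finally show ?case by simp
qed

lemma mv2:
  assumes r1: "R1 U" and xy: "x \<in> SS" "y \<in> SS" "x \<noteq> y"
  shows "U (al @ replicate r y @ x # be) = (-1) ^ r * U (al @ x # replicate r y @ be)"
  using mv1[OF assms, of al r be] by (simp add: power_mult_distrib[symmetric])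

lemma sum_alt: "(\<Sum>j<b. (-1::'k::field) ^ j) = (if odd b then 1 else 0)"
  by (induction b) auto

definition Z :: "'k::field \<Rightarrow> (nat \<Rightarrow> nat \<Rightarrow> nat \<Rightarrow> 'k) \<Rightarrow> nat \<Rightarrow> nat \<Rightarrow> nat \<Rightarrow> 'k" where
  "Z lam c a b k = lam * c (a+1) b k + lam^2 * (-1)^a * c a (b+1) k + lam^4 * (-1)^(a+b) * c a b (k+1)
     - (if odd b then (-1)^a * c (a+2) (b-1) k else 0)
     - (if k = 1 then (-1)^(a+b) * c a (b+2) 0 else 0)
     + (-1)^Suc (a+b+k) * ((-1)^(k+b) * c (a+1) b k + (-1)^k * c a (b+1) k + c a b (k+1))"

lemma Dw_rep:
  fixes U :: "nat list \<Rightarrow> 'k::field"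
  assumes n: "n > 10" and U: "supp U" and r1: "R1 U" and r2: "R2 U" and k: "k \<le> 1"
  shows "Dw n lam U (rep a b k) = Z lam (\<lambda>a b k. U (rep a b k)) a b k"
proof -
  let ?c = "\<lambda>a b k. U (rep a b k)"
  have S: "1 \<in> SS" "2 \<in> SS" "4 \<in> SS" "(1::nat) \<noteq> 2" "(2::nat) \<noteq> 1" "(1::nat) \<noteq> 4" "(4::nat) \<noteq> 1"
    "(2::nat) \<noteq> 4" "(4::nat) \<noteq> 2" by (auto simp: SS_def)
  have f1: "U (1 # rep a b k) = ?c (a+1) b k" by (simp add: rep_def)
  have f2: "U (2 # rep a b k) = (-1)^a * ?c a (b+1) k"
    using mv1[OF r1 S(2) S(1) S(5), of "[]" a "replicate b 2 @ replicate k 4"]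
    by (simp add: rep_def)
  have f4: "U (4 # rep a b k) = (-1)^(a+b) * ?c a b (k+1)"
  proof -
    have "U (4 # rep a b k) = (-1)^a * U (replicate a 1 @ 4 # replicate b 2 @ replicate k 4)"
      using mv1[OF r1 S(3) S(1) S(7), of "[]" a "replicate b 2 @ replicate k 4"] by (simp add: rep_def)
    also have "U (replicate a 1 @ 4 # replicate b 2 @ replicate k 4) = (-1)^b * U (replicate a 1 @ replicate b 2 @ 4 # replicate k 4)"
      using mv1[OF r1 S(3) S(2) S(9), of "replicate a 1" b "replicate k 4"] by simp
    finally show ?thesis by (simp add: rep_def power_add)
  qed
  have front: "(\<Sum>s\<in>SS. lam ^ s * U (s # rep a b k)) = lam * ?c (a+1) b k + lam^2 * (-1)^a * ?c a (b+1) k + lam^4 * (-1)^(a+b) * ?c a b (k+1)"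
    unfolding sum_SS using f1 f2 f4 by simp
  have b4: "U (rep a b k @ [4]) = ?c a b (k+1)" by (simp add: rep_def replicate_append_same)
  have b2: "U (rep a b k @ [2]) = (-1)^k * ?c a (b+1) k"
    using mv2[OF r1 S(2) S(3) S(8), of "replicate a 1 @ replicate b 2" k "[]"]
    by (simp add: rep_def replicate_append_same[symmetric])
  have b1: "U (rep a b k @ [1]) = (-1)^(k+b) * ?c (a+1) b k"
  proof -
    have "U (rep a b k @ [1]) = (-1)^k * U (replicate a 1 @ replicate b 2 @ 1 # replicate k 4)"
      using mv2[OF r1 S(1) S(3) S(6), of "replicate a 1 @ replicate b 2" k "[]"] by (simp add: rep_def)
    also have "U (replicate a 1 @ replicate b 2 @ 1 # replicate k 4) = (-1)^b * U (replicate a 1 @ 1 # replicate b 2 @ replicate k 4)"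
      using mv2[OF r1 S(1) S(2) S(4), of "replicate a 1" b "replicate k 4"] by simp
    finally show ?thesis by (simp add: rep_def power_add replicate_append_same[symmetric])
  qed
  have bk: "(\<Sum>s\<in>SS. U (rep a b k @ [s])) = (-1)^(k+b) * ?c (a+1) b k + (-1)^k * ?c a (b+1) k + ?c a b (k+1)"
    unfolding sum_SS using b1 b2 b4 by simp
  let ?w = "rep a b k"
  let ?f = "\<lambda>i. (-1) ^ Suc i * gsp n U ?w i"
  have i1: "?f i = 0" if "i < a" for i
  proof -
    have "?w ! i = 1" using that by (simp add: rep_def nth_append)
    then show ?thesis by (simp add: gsp_def spl_1'[OF n U])
  qed
  have i2: "?f (a + j) = (-1) ^ Suc (a + j) * ?c (a+2) (b-1) k" if j: "j < b" for j
  proof -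
    have nt: "?w ! (a + j) = 2" using j by (simp add: rep_def nth_append)
    have tk: "take (a + j) ?w = replicate a 1 @ replicate j 2" using j by (simp add: rep_def)
    have dr: "drop (Suc (a + j)) ?w = replicate (b - Suc j) 2 @ replicate k 4" using j by (simp add: rep_def)
    have "gsp n U ?w (a + j) = U ((replicate a 1 @ replicate j 2) @ 1 # 1 # replicate (b - Suc j) 2 @ replicate k 4)"
      unfolding gsp_def nt tk dr using spl_vals(2)[OF n U] by simp
    also have "\<dots> = (-1)^j * U (replicate a 1 @ 1 # replicate j 2 @ 1 # replicate (b - Suc j) 2 @ replicate k 4)"
      using mv2[OF r1 S(1) S(2) S(4), of "replicate a 1" j "1 # replicate (b - Suc j) 2 @ replicate k 4"] by simp
    also have "U (replicate a 1 @ 1 # replicate j 2 @ 1 # replicate (b - Suc j) 2 @ replicate k 4)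
        = (-1)^j * U ((replicate a 1 @ [1]) @ 1 # replicate j 2 @ replicate (b - Suc j) 2 @ replicate k 4)"
      using mv2[OF r1 S(1) S(2) S(4), of "replicate a 1 @ [1]" j "replicate (b - Suc j) 2 @ replicate k 4"] by simp
    also have "(replicate a 1 @ [1]) @ 1 # replicate j 2 @ replicate (b - Suc j) 2 @ replicate k 4 = rep (a+2) (b-1) k"
    proof -
      have "replicate j (2::nat) @ replicate (b - Suc j) 2 = replicate (b - 1) 2"
        using j by (simp add: replicate_add[symmetric])
      then show ?thesis by (simp add: rep_def replicate_append_same numeral_2_eq_2)
    qed
    finally have "gsp n U ?w (a + j) = ((-1)^j * (-1)^j) * ?c (a+2) (b-1) k" by simp
    moreover have "((-1::'k)^j * (-1)^j) = 1" by (simp add: power_mult_distrib[symmetric])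
    ultimately show ?thesis by simp
  qed
  have i3: "?f (a + b + l) = (if k = 1 then (-1) ^ Suc (a + b) * ?c a (b+2) 0 else 0)" if l: "l < k" for l
  proof -
    have k1: "k = 1" "l = 0" using l k by auto
    have nt: "?w ! (a + b) = 4" using k1 by (simp add: rep_def nth_append)
    have tk: "take (a + b) ?w = replicate a 1 @ replicate b 2" using k1 by (simp add: rep_def)
    have dr: "drop (Suc (a + b)) ?w = []" using k1 by (simp add: rep_def)
    have "gsp n U ?w (a + b) = U ((replicate a 1 @ replicate b 2) @ [2, 2])"
      unfolding gsp_def nt tk dr using spl_vals(3)[OF n U] by simp
    also have "(replicate a 1 @ replicate b 2) @ [2, 2] = rep a (b+2) 0"
      unfolding rep_def replicate_add by (simp add: eval_nat_numeral)
    finally show ?thesis using k1 by simp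
  qed
  have int: "(\<Sum>i<length ?w. ?f i) = - (if odd b then (-1)^a * ?c (a+2) (b-1) k else 0)
      - (if k = 1 then (-1)^(a+b) * ?c a (b+2) 0 else 0)"
  proof -
    have "(\<Sum>i<length ?w. ?f i) = (\<Sum>i<a. ?f i) + (\<Sum>j<b. ?f (a + j)) + (\<Sum>l<k. ?f (a + b + l))"
      by (simp add: sum_split_add add.assoc)
    also have "(\<Sum>i<a. ?f i) = 0" using i1 by simp
    also have "(\<Sum>j<b. ?f (a + j)) = (\<Sum>j<b. (-1) ^ Suc (a + j) * ?c (a+2) (b-1) k)" using i2 by simp
    also have "\<dots> = - ((-1)^a * (\<Sum>j<b. (-1)^j)) * ?c (a+2) (b-1) k"
      by (simp add: sum_distrib_right sum_distrib_left power_add mult.assoc sum_negf)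
    also have "(\<Sum>l<k. ?f (a + b + l)) = (if k = 1 then (-1) ^ Suc (a + b) * ?c a (b+2) 0 else 0)"
    proof (cases "k = 1")
      case True then show ?thesis using i3[of 0] by simp
    next
      case False then have "k = 0" using k by simp
      then show ?thesis by simp
    qed
    finally show ?thesis unfolding sum_alt by simp
  qed
  show ?thesis unfolding Dw_alt Z_def front bk int by (simp add: algebra_simps)
qed


lemma rel_l:
  fixes c :: "nat \<Rightarrow> nat \<Rightarrow> nat \<Rightarrow> 'k::field"
  assumes c2: "\<And>a b. c a b 2 = 0"
  shows "- ((-1)^(cc+d) * Z lam c cc (d+2) 0) + (lam - (-1)^cc) * Z lam c (cc+1) d 1
     + (-1)^cc * (lam^2 - (-1)^d) * Z lam c cc (d+1) 1
     + (if odd d then - ((-1)^cc * Z lam c (cc+2) (d-1) 1) else 0) = 0"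
proof -
  have c2': "\<And>a b. c a b (Suc (Suc 0)) = 0" using c2 by (simp add: numeral_2_eq_2)
  obtain f where "cc = 2*f \<or> cc = 2*f+1" by (metis oddE evenE)
  moreover obtain e where "d = 2*e \<or> d = 2*e+1" by (metis oddE evenE)
  ultimately consider "cc = 2*f" "d = 2*e" | "cc = 2*f" "d = 2*e+1" | "cc = 2*f+1" "d = 2*e" | "cc = 2*f+1" "d = 2*e+1"
    by blast
  then show ?thesis
  proof cases
    case 1 show ?thesis unfolding Z_def 1(1) 1(2) by (simp add: c2 c2' power_add power_mult) algebra
  next
    case 2 show ?thesis unfolding Z_def 2(1) 2(2) by (simp add: c2 c2' power_add power_mult) algebra
  next
    case 3 show ?thesis unfolding Z_def 3(1) 3(2) by (simp add: c2 c2' power_add power_mult) algebra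
  next
    case 4 show ?thesis unfolding Z_def 4(1) 4(2) by (simp add: c2 c2' power_add power_mult) algebra
  qed
qed

lemma rel_X:
  fixes c :: "nat \<Rightarrow> nat \<Rightarrow> nat \<Rightarrow> 'k::field"
  assumes c2: "\<And>a b. c a b 2 = 0"
  shows "- ((-1)^p * Z lam c (p+2) 0 0) + (lam - (-1)^p) * Z lam c (p+1) 1 0
     + (-1)^p * (lam^2 + 1) * Z lam c p 2 0 - (-1)^p * (lam^4 - 1) * Z lam c p 1 1 = 0"
proof -
  have c2': "\<And>a b. c a b (Suc (Suc 0)) = 0" using c2 by (simp add: numeral_2_eq_2)
  obtain f where "p = 2*f \<or> p = 2*f+1" by (metis oddE evenE)
  then consider "p = 2*f" | "p = 2*f+1" by blast
  then show ?thesis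
  proof cases
    case 1 show ?thesis unfolding Z_def 1 by (simp add: c2 c2' power_add power_mult numeral_2_eq_2[symmetric] numeral_3_eq_3[symmetric]) algebra
  next
    case 2 show ?thesis unfolding Z_def 2 by (simp add: c2 c2' power_add power_mult numeral_2_eq_2[symmetric] numeral_3_eq_3[symmetric]) algebra
  qed
qed

lemma rel_2:
  fixes c :: "nat \<Rightarrow> nat \<Rightarrow> nat \<Rightarrow> 'k::field"
  assumes c2: "\<And>a b. c a b 2 = 0"
  shows "(lam + 1) * Z lam c 0 1 0 + Z lam c 1 0 0 + (lam + 1) * (lam^2 + 1) * Z lam c 0 0 1 = 0"
proof -
  have c2': "\<And>a b. c a b (Suc (Suc 0)) = 0" using c2 by (simp add: numeral_2_eq_2)
  show ?thesis unfolding Z_def by (simp add: c2 c2' numeral_2_eq_2[symmetric] numeral_3_eq_3[symmetric]) algebra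
qed


lemma chain_scale_vs: "vector_space (chain_scale :: 'k::field \<Rightarrow> (nat list \<Rightarrow> 'k) \<Rightarrow> _)"
  by unfold_locales (auto simp: chain_scale_def fun_eq_iff algebra_simps)

interpretation cs: vector_space "chain_scale :: 'k::field \<Rightarrow> (nat list \<Rightarrow> 'k) \<Rightarrow> _"
  by (rule chain_scale_vs)

lemma chain_scale_apply[simp]: "chain_scale c u q = c * u q"
  by (simp add: chain_scale_def)

lemma sum_fun_apply: "(\<Sum>x\<in>A. f x) q = (\<Sum>x\<in>A. (f x) q)"
  by (induction A rule: infinite_finite_induct) auto

definition delta :: "nat list \<Rightarrow> nat list \<Rightarrow> 'k::field" where
  "delta q p = (if p = q then 1 else 0)"

definition restr :: "nat list set \<Rightarrow> (nat list \<Rightarrow> 'k::field) \<Rightarrow> nat list \<Rightarrow> 'k" where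
  "restr Q v = (\<lambda>p. if p \<in> Q then v p else 0)"

lemma restr_hom: "module_hom (chain_scale :: 'k::field \<Rightarrow> (nat list \<Rightarrow> 'k) \<Rightarrow> _) chain_scale (restr Q)"
proof -
  have m: "module (chain_scale :: 'k::field \<Rightarrow> (nat list \<Rightarrow> 'k) \<Rightarrow> _)"
    using chain_scale_vs by (simp add: module_iff_vector_space)
  show ?thesis
    by (rule module_hom.intro[OF m m]) (unfold_locales, auto simp: restr_def fun_eq_iff)
qed

lemma restr_span:
  assumes "finite Q"
  shows "restr Q v \<in> cs.span ((delta :: nat list \<Rightarrow> nat list \<Rightarrow> 'k::field) ` Q)"
proof -
  have "restr Q v = (\<Sum>q\<in>Q. chain_scale (v q) (delta q))"
  proof (rule ext)
    fix x
    have "(\<Sum>q\<in>Q. chain_scale (v q) (delta q)) x = (\<Sum>q\<in>Q. if q = x then v q else 0)"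
      unfolding sum_fun_apply by (rule sum.cong) (auto simp: delta_def)
    also have "\<dots> = (if x \<in> Q then v x else 0)" by (rule sum.delta[OF assms])
    finally show "restr Q v x = (\<Sum>q\<in>Q. chain_scale (v q) (delta q)) x" by (simp add: restr_def)
  qed
  also have "\<dots> \<in> cs.span (delta ` Q)"
    by (intro cs.span_sum cs.span_scale cs.span_base) auto
  finally show ?thesis .
qed

lemma dim_by_points:
  fixes V :: "(nat list \<Rightarrow> 'k::field) set"
  assumes sub: "cs.subspace V"
    and Q: "finite Q" "card Q \<le> m"
    and inj: "\<And>v. v \<in> V \<Longrightarrow> (\<forall>q\<in>Q. v q = 0) \<Longrightarrow> v = 0"
    and T: "T \<subseteq> V" "cs.independent T" "finite T" "card T = m"
  shows "cs.dim V = m"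
proof -
  interpret E: module_hom chain_scale chain_scale "restr Q :: (nat list \<Rightarrow> 'k) \<Rightarrow> _"
    by (rule restr_hom)
  obtain B where B: "B \<subseteq> V" "cs.independent B" "V \<subseteq> cs.span B" "card B = cs.dim V"
    using cs.basis_exists by blast
  have spB: "cs.span B \<subseteq> V" using cs.span_minimal[OF B(1) sub] .
  have injE: "inj_on (restr Q) (cs.span B)"
  proof (rule inj_onI)
    fix x y assume x: "x \<in> cs.span B" and y: "y \<in> cs.span B" and e: "restr Q x = restr Q y"
    have d: "x - y \<in> V" using cs.subspace_diff[OF sub] x y spB by blast
    have "\<forall>q\<in>Q. (x - y) q = 0"
    proof
      fix q assume "q \<in> Q"
      then show "(x - y) q = 0" using fun_cong[OF e, of q] by (simp add: restr_def)
    qed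
    then have "x - y = 0" using inj[OF d] by blast
    then show "x = y" by simp
  qed
  have indE: "cs.independent (restr Q ` B)" by (rule E.independent_injective_image[OF B(2) injE])
  have spE: "restr Q ` B \<subseteq> cs.span ((delta :: nat list \<Rightarrow> nat list \<Rightarrow> 'k) ` Q)"
    using restr_span[OF Q(1)] by blast
  have "finite (restr Q ` B) \<and> card (restr Q ` B) \<le> card ((delta :: nat list \<Rightarrow> nat list \<Rightarrow> 'k) ` Q)"
    by (rule cs.independent_span_bound[OF finite_imageI[OF Q(1)] indE spE])
  moreover have "inj_on (restr Q) B" using injE cs.span_superset inj_on_subset by blast
  moreover have "card ((delta :: nat list \<Rightarrow> nat list \<Rightarrow> 'k) ` Q) \<le> m" using card_image_le[OF Q(1)] Q(2) le_trans by blast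
  ultimately have finB: "finite B" and cB: "card B \<le> m"
    using finite_imageD card_image by fastforce+
  have "finite T \<and> card T \<le> card B"
    by (rule cs.independent_span_bound[OF finB T(2)]) (use T(1) B(3) in blast)
  then show ?thesis using cB T(4) B(4) by simp
qed


lemma map_shift_pth: "b < n \<Longrightarrow> map (\<lambda>v. (v + n - 1) mod n) (pth n b w) = pth n ((b + n - 1) mod n) w"
proof (induction w arbitrary: b)
  case Nil then show ?case by simp
next
  case (Cons s w)
  have n: "0 < n" using Cons by simp
  have "((b + s) mod n + n - 1) mod n = ((b + n - 1) mod n + s) mod n"
  proof -
    have "((b + s) mod n + n - 1) mod n = ((b + s) mod n + (n - 1)) mod n" using n by simp
    also have "\<dots> = (b + s + (n - 1)) mod n" by (simp add: mod_add_left_eq)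
    also have "b + s + (n - 1) = b + (n - 1) + s" by simp
    also have "(b + (n - 1) + s) mod n = ((b + (n - 1)) mod n + s) mod n" by (rule mod_add_left_eq[symmetric])
    also have "b + (n - 1) = b + n - 1" using n by simp
    finally show ?thesis .
  qed
  moreover have "(b + s) mod n < n" using n by simp
  ultimately show ?case using Cons.IH[of "(b + s) mod n"] by simp
qed

lemma path_bd_len:
  assumes u: "u \<in> A_space n S m" and q: "length q \<noteq> m"
  shows "path_bd n u q = 0"
proof -
  have z: "\<And>p. p \<in> paths_len n (Suc (length q)) \<Longrightarrow> u p = 0"
    using u q unfolding A_space_def paths_len_def by fastforce
  show ?thesis using z unfolding path_bd_def by (auto intro!: sum.neutral)
qed

lemma path_bd_add: "path_bd n (u + v) = path_bd n u + path_bd n v"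
  by (rule ext) (auto simp: path_bd_def sum.distrib[symmetric] distrib_left intro!: sum.cong)

lemma path_bd_scale: "path_bd n (chain_scale c u) = chain_scale c (path_bd n u)"
  by (rule ext) (auto simp: path_bd_def sum_distrib_left mult.left_commute intro!: sum.cong)

lemma A_space_add: "u \<in> A_space n S m \<Longrightarrow> v \<in> A_space n S m \<Longrightarrow> u + v \<in> A_space n S m"
proof -
  assume u: "u \<in> A_space n S m" and v: "v \<in> A_space n S m"
  show ?thesis unfolding A_space_def
  proof (intro CollectI allI impI)
    fix p assume "(u + v) p \<noteq> 0"
    then have "u p \<noteq> 0 \<or> v p \<noteq> 0" by auto
    then show "allowed_path n S p \<and> length p = Suc m" using u v unfolding A_space_def by blast
  qed
qed

lemma A_space_scale: "u \<in> A_space n S m \<Longrightarrow> chain_scale c u \<in> A_space n S m"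
  unfolding A_space_def by auto

lemma A_space_zero: "0 \<in> A_space n S m"
  unfolding A_space_def by auto

lemma tau_add: "tau_shift n (u + v) = tau_shift n u + tau_shift n v"
  by (rule ext) (simp add: tau_shift_def)

lemma tau_scale: "tau_shift n (chain_scale c u) = chain_scale c (tau_shift n u)"
  by (rule ext) (simp add: tau_shift_def)

lemma path_bd_zero: "path_bd n 0 = 0"
proof -
  have "(0::nat list \<Rightarrow> 'a::field) = chain_scale 0 0" by (simp add: fun_eq_iff)
  moreover have "path_bd n (chain_scale 0 (0::nat list \<Rightarrow> 'a)) = chain_scale 0 (path_bd n 0)" by (rule path_bd_scale)
  ultimately have "path_bd n (0::nat list \<Rightarrow> 'a) = chain_scale 0 (path_bd n 0)" by simp
  then show ?thesis by (simp add: fun_eq_iff)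
qed

lemma Omega_eig_add: "u \<in> Omega_eig n S m lam \<Longrightarrow> v \<in> Omega_eig n S m lam \<Longrightarrow> u + v \<in> Omega_eig n S m lam"
  unfolding Omega_eig_def Omega_space_def
  by (auto simp: A_space_add path_bd_add tau_add fun_eq_iff distrib_left)

lemma Omega_eig_scale: "u \<in> Omega_eig n S m lam \<Longrightarrow> chain_scale c u \<in> Omega_eig n S m lam"
  unfolding Omega_eig_def Omega_space_def
  by (auto simp: A_space_scale path_bd_scale tau_scale fun_eq_iff mult.left_commute)

lemma Omega_eig_zero: "0 \<in> Omega_eig n S m lam"
  unfolding Omega_eig_def Omega_space_def
  by (auto simp: A_space_zero path_bd_zero tau_shift_def fun_eq_iff)

lemma image_subspace: "cs.subspace (path_bd n ` Omega_eig n S m (lam::'k::field))"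
  unfolding cs.subspace_def
proof (intro conjI ballI allI)
  show "0 \<in> path_bd n ` Omega_eig n S m lam" using Omega_eig_zero path_bd_zero by (metis image_eqI)
next
  fix x y assume "x \<in> path_bd n ` Omega_eig n S m lam" "y \<in> path_bd n ` Omega_eig n S m lam"
  then obtain u v where "u \<in> Omega_eig n S m lam" "v \<in> Omega_eig n S m lam" "x = path_bd n u" "y = path_bd n v" by blast
  then show "x + y \<in> path_bd n ` Omega_eig n S m lam" using Omega_eig_add path_bd_add by (metis image_eqI)
next
  fix c :: 'k and x assume "x \<in> path_bd n ` Omega_eig n S m lam"
  then obtain u where "u \<in> Omega_eig n S m lam" "x = path_bd n u" by blast
  then show "chain_scale c x \<in> path_bd n ` Omega_eig n S m lam" using Omega_eig_scale path_bd_scale by (metis image_eqI)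
qed

definition Uw :: "nat \<Rightarrow> nat \<Rightarrow> (nat list \<Rightarrow> 'k::field) \<Rightarrow> nat list \<Rightarrow> 'k" where
  "Uw n m u w = (if set w \<subseteq> SS \<and> length w = m then u (pth n 0 w) else 0)"

lemma Uw_supp: "supp (Uw n m u)"
  unfolding supp_def Uw_def by auto

lemma lam_nz: "(lam::'k::field) ^ n = 1 \<Longrightarrow> n > 0 \<Longrightarrow> lam \<noteq> 0"
  by (metis power_0_left zero_neq_one gr_implies_not0)

lemma eig_formula:
  fixes lam :: "'k::field"
  assumes n: "n > 10" and lam: "lam ^ n = 1" and u: "u \<in> Omega_eig n SS m lam"
  shows "a < n \<Longrightarrow> set w \<subseteq> {..<n} \<Longrightarrow> u (pth n a w) = inverse lam ^ a * Uw n m u w"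
proof -
  assume a: "a < n" and w: "set w \<subseteq> {..<n}"
  have uA: "u \<in> A_space n SS m" and tau: "tau_shift n u = (\<lambda>q. lam * u q)"
    using u by (auto simp: Omega_eig_def Omega_space_def)
  have l0: "lam \<noteq> 0" using lam_nz[OF lam] n by simp
  show ?thesis
  proof (cases "set w \<subseteq> SS \<and> length w = m")
    case False
    have "u (pth n a w) = 0"
    proof (rule ccontr)
      assume "u (pth n a w) \<noteq> 0"
      then have "allowed_path n SS (pth n a w) \<and> length (pth n a w) = Suc m" using uA by (auto simp: A_space_def)
      then show False using False allowed_pth[OF n a w] by simp
    qed
    moreover have "Uw n m u w = 0" using False unfolding Uw_def by argo
    ultimately show ?thesis by simp
  next
    case True
    have "u (pth n a w) = inverse lam ^ a * u (pth n 0 w)" using a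
    proof (induction a)
      case 0 then show ?case by simp
    next
      case (Suc a)
      have a': "a < n" using Suc by simp
      have st: "set (pth n (Suc a) w) \<subseteq> {..<n}" using pth_set[of n "Suc a" w] Suc n by simp
      have "tau_shift n u (pth n (Suc a) w) = u (pth n ((Suc a + n - 1) mod n) w)"
        using st map_shift_pth[OF Suc.prems, of w] by (simp add: tau_shift_def)
      also have "(Suc a + n - 1) mod n = a" using a' by simp
      finally have "u (pth n a w) = lam * u (pth n (Suc a) w)" using tau by (metis)
      then have "u (pth n (Suc a) w) = inverse lam * u (pth n a w)" using l0 by (simp add: field_simps)
      then show ?case using Suc.IH[OF a'] by simp
    qed
    then show ?thesis using True by (simp add: Uw_def)
  qed
qed

lemma gsp1_left: "i < length al \<Longrightarrow> gsp n U (al @ t # be) i = spl n (\<lambda>v. U (v @ t # be)) (take i al) (al ! i) (drop (Suc i) al)"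
  by (simp add: gsp_def spl_def nth_append)

lemma gsp1_right: "k < length be \<Longrightarrow> gsp n U (al @ t # be) (length al + Suc k) = spl n U (al @ t # take k be) (be ! k) (drop (Suc k) be)"
proof -
  have t: "take (length al + Suc k) (al @ t # be) = al @ t # take k be" by simp
  have d: "drop (Suc (length al + Suc k)) (al @ t # be) = drop (Suc k) be" by simp
  have nn: "(al @ t # be) ! (length al + Suc k) = be ! k" by (simp add: nth_append)
  show ?thesis unfolding gsp_def t d nn ..
qed

lemma Dw_bad:
  assumes U: "supp U" and t: "t \<notin> SS"
  shows "Dw n lam U (al @ t # be) = (-1) ^ Suc (length al) * spl n U al t be"
proof -
  let ?w = "al @ t # be"
  let ?f = "\<lambda>i. (-1) ^ Suc i * gsp n U ?w i"
  have f1: "U (s # ?w) = 0" for s using supp_zero[OF U t, of "s # al" be] by simp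
  have b1: "U (?w @ [s]) = 0" for s using supp_zero[OF U t, of al "be @ [s]"] by simp
  have left: "gsp n U ?w i = 0" if "i < length al" for i
  proof -
    have "U ((take i al @ s # sub n (al ! i) s # drop (Suc i) al) @ t # be) = 0" for s
      by (rule supp_zero[OF U t])
    then show ?thesis unfolding gsp1_left[OF that] spl_def by simp
  qed
  have right: "gsp n U ?w (length al + Suc k) = 0" if "k < length be" for k
  proof -
    have "U ((al @ t # take k be) @ s # sub n (be ! k) s # drop (Suc k) be) = 0" for s
      using supp_zero[OF U t, of al "take k be @ s # sub n (be ! k) s # drop (Suc k) be"] by simp
    then show ?thesis unfolding gsp1_right[OF that] spl_def by simp
  qed
  have "(\<Sum>i<length ?w. ?f i) = (\<Sum>i<length al. ?f i) + (\<Sum>k<Suc (length be). ?f (length al + k))"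
    using sum_split_add[of ?f "length al" "Suc (length be)"] by simp
  also have "(\<Sum>k<Suc (length be). ?f (length al + k)) = ?f (length al) + (\<Sum>k<length be. ?f (length al + Suc k))"
    using sum.lessThan_Suc_shift[of "\<lambda>k. ?f (length al + k)" "length be"] by simp
  also have "(\<Sum>i<length al. ?f i) = 0" using left by simp
  also have "(\<Sum>k<length be. ?f (length al + Suc k)) = 0" using right by simp
  finally have "(\<Sum>i<length ?w. ?f i) = (-1) ^ Suc (length al) * spl n U al t be"
    by (simp add: gsp_def)
  then show ?thesis unfolding Dw_alt using f1 b1 by simp
qed


lemma SS_pos_lt: "n > 10 \<Longrightarrow> x \<in> SS \<Longrightarrow> 0 < x \<and> x < n"
  by (auto simp: SS_def)

lemma Omega_spl0:
  fixes lam :: "'k::field"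
  assumes n: "n > 10" and lam: "lam ^ n = 1" and u: "u \<in> Omega_eig n SS m lam" and m: "m \<ge> 2"
    and al: "set al \<subseteq> SS" and be: "set be \<subseteq> SS" and len: "length al + length be + 2 = m"
    and t: "t \<notin> SS" "0 < t" "t < n"
  shows "spl n (Uw n m u) al t be = 0"
proof -
  let ?w = "al @ t # be"
  let ?U = "Uw n m u"
  have wl: "\<forall>x\<in>set ?w. 0 < x \<and> x < n" using al be t SS_pos_lt[OF n] by auto
  have n0: "0 < n" using n by simp
  have "path_bd n u (pth n 0 ?w) = inverse lam ^ 0 * Dw n lam ?U ?w"
  proof (rule path_bd_word[OF n lam])
    show "\<And>w. ?U w \<noteq> 0 \<Longrightarrow> set w \<subseteq> SS" using Uw_supp unfolding supp_def by blast
    show "\<And>a w. a < n \<Longrightarrow> set w \<subseteq> {..<n} \<Longrightarrow> u (pth n a w) = inverse lam ^ a * ?U w"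
      using eig_formula[OF n lam u] by blast
    show "0 < n" by (rule n0)
    show "\<forall>x\<in>set ?w. 0 < x \<and> x < n" by (rule wl)
  qed
  moreover have "path_bd n u (pth n 0 ?w) = 0"
  proof (rule ccontr)
    assume ne: "path_bd n u (pth n 0 ?w) \<noteq> 0"
    have "path_bd n u \<in> A_space n SS (m - 1)" using u m by (auto simp: Omega_eig_def Omega_space_def)
    then have "allowed_path n SS (pth n 0 ?w)" using ne by (auto simp: A_space_def)
    moreover have "set ?w \<subseteq> {..<n}" using wl by auto
    ultimately have "set ?w \<subseteq> SS" using allowed_pth[OF n n0] by blast
    then show False using t by simp
  qed
  ultimately have "Dw n lam ?U ?w = 0" by simp
  moreover have "Dw n lam ?U ?w = (-1) ^ Suc (length al) * spl n ?U al t be" by (rule Dw_bad[OF Uw_supp t(1)])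
  ultimately have "(-1) ^ Suc (length al) * spl n ?U al t be = 0" by simp
  then show ?thesis by simp
qed

lemma Uw_R12:
  fixes lam :: "'k::field"
  assumes n: "n > 10" and lam: "lam ^ n = 1" and u: "u \<in> Omega_eig n SS m lam" and m: "m \<ge> 2"
  shows "R1 (Uw n m u)" "R2 (Uw n m u)"
proof -
  let ?U = "Uw n m u"
  have sv: "\<And>al t be. set al \<subseteq> SS \<Longrightarrow> set be \<subseteq> SS \<Longrightarrow> length al + length be + 2 = m \<Longrightarrow> t \<notin> SS \<Longrightarrow> 0 < t \<Longrightarrow> t < n
      \<Longrightarrow> spl n ?U al t be = 0"
    using Omega_spl0[OF n lam u m] by blast
  note spv = spl_vals[OF n Uw_supp]
  have t3: "(3::nat) \<notin> SS" "(5::nat) \<notin> SS" "(6::nat) \<notin> SS" "(8::nat) \<notin> SS" by (auto simp: SS_def)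
  have tl: "(3::nat) < n" "(5::nat) < n" "(6::nat) < n" "(8::nat) < n" using n by auto
  show "R1 ?U" unfolding R1_def
  proof (intro allI impI)
    fix al be x y assume x: "x \<in> SS" and y: "y \<in> SS" and xy: "x \<noteq> y"
    show "?U (al @ x # y # be) = - ?U (al @ y # x # be)"
    proof (cases "set al \<subseteq> SS \<and> set be \<subseteq> SS \<and> length al + length be + 2 = m")
      case True
      then have C: "set al \<subseteq> SS" "set be \<subseteq> SS" "length al + length be + 2 = m" by auto
      have e3: "?U (al @ 1 # 2 # be) + ?U (al @ 2 # 1 # be) = 0" using sv[OF C t3(1) _ tl(1)] unfolding spv(4) by simp
      have e5: "?U (al @ 1 # 4 # be) + ?U (al @ 4 # 1 # be) = 0" using sv[OF C t3(2) _ tl(2)] unfolding spv(5) by simp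
      have e6: "?U (al @ 2 # 4 # be) + ?U (al @ 4 # 2 # be) = 0" using sv[OF C t3(3) _ tl(3)] unfolding spv(6) by simp
      have xs: "x = 1 \<or> x = 2 \<or> x = 4" "y = 1 \<or> y = 2 \<or> y = 4" using x y by (auto simp: SS_def)
      show ?thesis using xs xy e3 e5 e6 by (auto simp: eq_neg_iff_add_eq_0 add.commute)
    next
      case False
      have "set (al @ x # y # be) \<subseteq> SS \<longleftrightarrow> set al \<subseteq> SS \<and> set be \<subseteq> SS" using x y by auto
      moreover have "set (al @ y # x # be) \<subseteq> SS \<longleftrightarrow> set al \<subseteq> SS \<and> set be \<subseteq> SS" using x y by auto
      ultimately show ?thesis using False by (auto simp: Uw_def)
    qed
  qed
  show "R2 ?U" unfolding R2_def
  proof (intro allI)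
    fix al be
    show "?U (al @ 4 # 4 # be) = 0"
    proof (cases "set al \<subseteq> SS \<and> set be \<subseteq> SS \<and> length al + length be + 2 = m")
      case True
      then have C: "set al \<subseteq> SS" "set be \<subseteq> SS" "length al + length be + 2 = m" by auto
      show ?thesis using sv[OF C t3(4) _ tl(4)] unfolding spv(7) by simp
    next
      case False
      have "set (al @ 4 # 4 # be) \<subseteq> SS \<longleftrightarrow> set al \<subseteq> SS \<and> set be \<subseteq> SS" by (auto simp: SS_def)
      then show ?thesis using False by (auto simp: Uw_def)
    qed
  qed
qed

lemma regular_stp: "regular_path q \<Longrightarrow> set q \<subseteq> {..<n} \<Longrightarrow> \<forall>x\<in>set (stp n q). 0 < x"
proof (induction n q rule: stp.induct)
  case (1 n x y r)
  have "x \<noteq> y" using "1.prems"(1) unfolding regular_path_def by (metis Suc_less_eq length_Cons nth_Cons_0 nth_Cons_Suc zero_less_Suc)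
  moreover have "x < n" "y < n" using "1.prems"(2) by auto
  ultimately have "0 < (y + n - x) mod n"
  proof -
    assume "x \<noteq> y" "x < n" "y < n"
    show ?thesis
    proof (cases "x < y")
      case True then have "(y + n - x) mod n = y - x" using \<open>y < n\<close>
        by (metis Nat.add_diff_assoc2 less_imp_le_nat mod_add_self2 mod_less less_imp_diff_less)
      then show ?thesis using True by simp
    next
      case False then have "(y + n - x) mod n = y + n - x" using \<open>x < n\<close> \<open>x \<noteq> y\<close> by simp
      then show ?thesis using False \<open>x < n\<close> by simp
    qed
  qed
  moreover have "regular_path (y # r)" using "1.prems"(1) unfolding regular_path_def
    by (metis Suc_less_eq length_Cons nth_Cons_Suc)
  ultimately show ?case using "1.IH" "1.prems"(2) by simp
qed auto

lemma bd_val: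
  fixes lam :: "'k::field"
  assumes n: "n > 10" and lam: "lam ^ n = 1" and u: "u \<in> Omega_eig n SS m lam"
    and q: "allowed_path n SS q"
  shows "path_bd n u q = inverse lam ^ (hd q) * Dw n lam (Uw n m u) (stp n q)"
proof -
  have n0: "0 < n" using n by simp
  have qn: "q \<noteq> []" "set q \<subseteq> {..<n}" using q by (auto simp: allowed_path_def)
  have h: "hd q < n" using qn by (metis hd_in_set lessThan_iff subset_iff)
  have qe: "pth n (hd q) (stp n q) = q" by (rule pth_stp[OF qn(2) qn(1)])
  have sl: "set (stp n q) \<subseteq> {..<n}" by (rule stp_set[OF n0])
  have "set (stp n q) \<subseteq> SS" using allowed_pth[OF n h sl] q qe by simp
  then have wl: "\<forall>x\<in>set (stp n q). 0 < x \<and> x < n" using SS_pos_lt[OF n] by blast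
  have "path_bd n u (pth n (hd q) (stp n q)) = inverse lam ^ (hd q) * Dw n lam (Uw n m u) (stp n q)"
  proof (rule path_bd_word[OF n lam])
    show "\<And>w. Uw n m u w \<noteq> 0 \<Longrightarrow> set w \<subseteq> SS" using Uw_supp unfolding supp_def by blast
    show "\<And>a w. a < n \<Longrightarrow> set w \<subseteq> {..<n} \<Longrightarrow> u (pth n a w) = inverse lam ^ a * Uw n m u w"
      using eig_formula[OF n lam u] by blast
  qed (use h wl in auto)
  then show ?thesis using qe by simp
qed


definition Qset :: "nat \<Rightarrow> nat \<Rightarrow> nat list set" where
  "Qset n m = (\<lambda>c. pth n 0 (rep c (m - 2 - c) 1)) ` {..m-2} \<union> {pth n 0 (rep (m - 2) 1 0)}"

lemma Qset_finite: "finite (Qset n m)"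
  by (simp add: Qset_def)

lemma Qset_card: "m \<ge> 2 \<Longrightarrow> card (Qset n m) \<le> m"
proof -
  assume m: "m \<ge> 2"
  have "card (Qset n m) \<le> card ((\<lambda>c. pth n 0 (rep c (m - 2 - c) 1)) ` {..m-2}) + card {pth n 0 (rep (m - 2) 1 0)}"
    unfolding Qset_def by (rule card_Un_le)
  also have "\<dots> \<le> card {..m-2} + 1" using card_image_le[of "{..m-2}"] by simp
  finally show ?thesis using m by simp
qed

lemma rep_SS: "set (rep a b k) \<subseteq> SS"
  by (auto simp: rep_def SS_def)

lemma rep_lt: "n > 10 \<Longrightarrow> set (rep a b k) \<subseteq> {..<n}"
  using rep_SS SS_lt by blast

lemma c2_zero:
  assumes r2: "R2 U"
  shows "U (rep a b 2) = 0"
proof -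
  have "rep a b 2 = (replicate a 1 @ replicate b 2) @ 4 # 4 # []"
    by (simp add: rep_def numeral_2_eq_2)
  then show ?thesis using R2_D[OF r2] by metis
qed

lemma upper_inj:
  fixes lam :: "'k::field"
  assumes n: "n > 10" and lam: "lam ^ n = 1" and m: "m \<ge> 2"
    and v: "v \<in> path_bd n ` Omega_eig n SS m lam"
    and vz: "\<forall>q\<in>Qset n m. v q = 0"
  shows "v = 0"
proof -
  obtain u where u: "u \<in> Omega_eig n SS m lam" and vu: "v = path_bd n u" using v by blast
  let ?U = "Uw n m u"
  let ?V = "Dw n lam ?U"
  let ?c = "\<lambda>a b k. ?U (rep a b k)"
  have n0: "0 < n" using n by simp
  note r12 = Uw_R12[OF n lam u m]
  have sU: "supp ?U" by (rule Uw_supp)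
  have c2: "\<And>a b. ?c a b 2 = 0" using c2_zero[OF r12(2)] by blast
  have vrep: "v (pth n 0 (rep a b k)) = ?V (rep a b k)" for a b k
  proof -
    have al: "allowed_path n SS (pth n 0 (rep a b k))" using allowed_pth[OF n n0 rep_lt[OF n]] rep_SS by blast
    show ?thesis using bd_val[OF n lam u al] stp_pth[OF n0 rep_lt[OF n]] vu by simp
  qed
  have zr: "?V (rep a b k) = Z lam ?c a b k" if "k \<le> 1" for a b k
    by (rule Dw_rep[OF n sU r12 that])
  have free1: "Z lam ?c c (m - 2 - c) 1 = 0" if "c \<le> m - 2" for c
  proof -
    have "pth n 0 (rep c (m - 2 - c) 1) \<in> Qset n m" using that by (auto simp: Qset_def)
    then have "v (pth n 0 (rep c (m - 2 - c) 1)) = 0" using vz by blast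
    moreover have "v (pth n 0 (rep c (m - 2 - c) 1)) = ?V (rep c (m - 2 - c) 1)" by (rule vrep)
    moreover have "?V (rep c (m - 2 - c) 1) = Z lam ?c c (m - 2 - c) 1" by (rule zr) simp
    ultimately show ?thesis by simp
  qed
  have free2: "Z lam ?c (m - 2) 1 0 = 0"
  proof -
    have "pth n 0 (rep (m - 2) 1 0) \<in> Qset n m" by (auto simp: Qset_def)
    then have "v (pth n 0 (rep (m - 2) 1 0)) = 0" using vz by blast
    moreover have "v (pth n 0 (rep (m - 2) 1 0)) = ?V (rep (m - 2) 1 0)" by (rule vrep)
    moreover have "?V (rep (m - 2) 1 0) = Z lam ?c (m - 2) 1 0" by (rule zr) simp
    ultimately show ?thesis by simp
  qed
  have claimA: "Z lam ?c a (d + 2) 0 = 0" if md: "m = a + 3 + d" for a d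
  proof -
    have f1: "Z lam ?c (a + 1) d 1 = 0" using free1[of "a + 1"] md by simp
    have f2: "Z lam ?c a (d + 1) 1 = 0" using free1[of a] md by simp
    have f3: "odd d \<Longrightarrow> Z lam ?c (a + 2) (d - 1) 1 = 0" using free1[of "a + 2"] md by (cases d) auto
    have "- ((-1)^(a+d) * Z lam ?c a (d+2) 0) + (lam - (-1)^a) * Z lam ?c (a+1) d 1
     + (-1)^a * (lam^2 - (-1)^d) * Z lam ?c a (d+1) 1
     + (if odd d then - ((-1)^a * Z lam ?c (a+2) (d-1) 1) else 0) = 0"
      by (rule rel_l, rule c2)
    then have "(-1)^(a+d) * Z lam ?c a (d+2) 0 = 0" using f1 f2 f3 by (cases "odd d") auto
    then show ?thesis by simp
  qed
  have allz: "?V (rep a b k) = 0" if k: "k \<le> 1" and len: "a + b + k = m - 1" for a b k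
  proof (cases "k = 1")
    case True
    then have "b = m - 2 - a" "a \<le> m - 2" using len by auto
    then show ?thesis using free1[of a] zr[of 1 a b] True by simp
  next
    case False
    then have k0: "k = 0" using k by simp
    then have ab: "a + b = m - 1" using len by simp
    show ?thesis
    proof (cases "a + 3 \<le> m")
      case True
      then obtain d where md: "m = a + 3 + d" by (metis add.commute le_Suc_ex)
      then have "b = d + 2" using ab by simp
      then show ?thesis using claimA[OF md] zr[of 0 a b] k0 by simp
    next
      case False
      then have "a = m - 2 \<or> a = m - 1" using ab m by auto
      then show ?thesis
      proof
        assume a: "a = m - 2"
        then have "b = 1" using ab m by simp
        then show ?thesis using free2 zr[of 0 a b] k0 a by simp
      next
        assume a: "a = m - 1"
        then have b: "b = 0" using ab m by simp
        show ?thesis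
        proof (cases "m \<ge> 3")
          case True
          then obtain p where p: "m = p + 3" by (metis add.commute le_Suc_ex)
          have rx: "- ((-1)^p * Z lam ?c (p+2) 0 0) + (lam - (-1)^p) * Z lam ?c (p+1) 1 0
             + (-1)^p * (lam^2 + 1) * Z lam ?c p 2 0 - (-1)^p * (lam^4 - 1) * Z lam ?c p 1 1 = 0"
            by (rule rel_X, rule c2)
          have g1: "Z lam ?c (p+1) 1 0 = 0" using free2 p by simp
          have g2: "Z lam ?c p 2 0 = 0" using claimA[of p 0] p by (simp add: numeral_2_eq_2)
          have g3: "Z lam ?c p 1 1 = 0" using free1[of p] p by simp
          have "(-1)^p * Z lam ?c (p+2) 0 0 = 0" using rx g1 g2 g3 by simp
          then have "Z lam ?c (p+2) 0 0 = 0" by simp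
          then show ?thesis using zr[of 0 a b] k0 a b p by simp
        next
          case False
          then have m2: "m = 2" using m by simp
          have rx: "(lam + 1) * Z lam ?c 0 1 0 + Z lam ?c 1 0 0 + (lam + 1) * (lam^2 + 1) * Z lam ?c 0 0 1 = 0"
            by (rule rel_2, rule c2)
          have g1: "Z lam ?c 0 1 0 = 0" using free2 m2 by simp
          have g3: "Z lam ?c 0 0 1 = 0" using free1[of 0] m2 by simp
          have "Z lam ?c 1 0 0 = 0" using rx g1 g3 by simp
          then show ?thesis using zr[of 0 a b] k0 a b m2 by simp
        qed
      qed
    qed
  qed
  have dr1: "R1 ?V" unfolding R1_def using Dw_R1[OF n sU r12(1)] by blast
  have dr2: "R2 ?V" unfolding R2_def using Dw_R2[OF n sU r12(1) r12(2)] by blast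
  have Vz: "?V w = 0" if "set w \<subseteq> SS" "length w = m - 1" for w
    using sort_zero[OF dr1 dr2, of "m - 1" w] allz that by blast
  show ?thesis
  proof (rule ext)
    fix q
    show "v q = 0 q"
    proof (rule ccontr)
      assume ne: "v q \<noteq> 0 q"
      have "path_bd n u \<in> A_space n SS (m - 1)" using u m by (auto simp: Omega_eig_def Omega_space_def)
      then have q: "allowed_path n SS q" "length q = m" using ne vu m by (auto simp: A_space_def)
      have qn: "q \<noteq> []" "set q \<subseteq> {..<n}" using q by (auto simp: allowed_path_def)
      have h: "hd q < n" using qn by (metis hd_in_set lessThan_iff subset_iff)
      have sl: "set (stp n q) \<subseteq> {..<n}" by (rule stp_set[OF n0])
      have "set (stp n q) \<subseteq> SS" using allowed_pth[OF n h sl] q pth_stp[OF qn(2) qn(1)] by simp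
      moreover have "length (stp n q) = m - 1" using q stp_length by simp
      ultimately have "?V (stp n q) = 0" using Vz by blast
      then show False using ne bd_val[OF n lam u q(1)] vu by simp
    qed
  qed
qed


definition good :: "nat \<Rightarrow> nat \<Rightarrow> nat list \<Rightarrow> bool" where
  "good m j w \<longleftrightarrow> length w = m \<and> set w \<subseteq> {1, 2} \<and> count_list w 1 = j"

definition sg :: "nat list \<Rightarrow> 'k::field" where
  "sg w = (-1) ^ inv w"

definition W :: "nat \<Rightarrow> nat \<Rightarrow> nat list \<Rightarrow> 'k::field" where
  "W m j w = (if good m j w then sg w else 0)"

definition Xel :: "nat \<Rightarrow> 'k::field \<Rightarrow> nat \<Rightarrow> nat \<Rightarrow> nat list \<Rightarrow> 'k" where
  "Xel n lam m j p = (if p \<noteq> [] \<and> set p \<subseteq> {..<n} \<and> good m j (stp n p) then inverse lam ^ (hd p) * sg (stp n p) else 0)"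

lemma Xel_pth: "a < n \<Longrightarrow> set w \<subseteq> {..<n} \<Longrightarrow> Xel n lam m j (pth n a w) = inverse lam ^ a * W m j w"
  using pth_set[of n a w] stp_pth[of a n w] by (simp add: Xel_def W_def)

lemma W_supp: "supp (W m j :: nat list \<Rightarrow> 'k::field)"
  unfolding supp_def W_def good_def SS_def by auto

lemma good_swap: "good m j (al @ x # y # be) = good m j (al @ y # x # be)"
  unfolding good_def by auto

lemma W_R1: "R1 (W m j :: nat list \<Rightarrow> 'k::field)"
  unfolding R1_def
proof (intro allI impI)
  fix al be x y assume x: "x \<in> SS" and y: "y \<in> SS" and xy: "x \<noteq> y"
  show "(W m j (al @ x # y # be) :: 'k) = - W m j (al @ y # x # be)"
  proof (cases "good m j (al @ x # y # be)")
    case False then show ?thesis using good_swap by (simp add: W_def)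
  next
    case True
    then have g2: "good m j (al @ y # x # be)" using good_swap by simp
    show ?thesis
    proof (cases "y < x")
      case True
      then show ?thesis using inv_swap[OF True, of al be] g2 \<open>good m j (al @ x # y # be)\<close> by (simp add: W_def sg_def)
    next
      case False
      then have "x < y" using xy by simp
      then show ?thesis using inv_swap[OF \<open>x < y\<close>, of al be] g2 \<open>good m j (al @ x # y # be)\<close> by (simp add: W_def sg_def)
    qed
  qed
qed

lemma W_R2: "R2 (W m j :: nat list \<Rightarrow> 'k::field)"
  unfolding R2_def W_def good_def by auto

lemma sub_not12:
  assumes n: "n > 10" and t: "0 < t" "t < n" "t \<notin> SS" "t \<noteq> 3" and s: "s \<in> {1, 2}"
  shows "sub n t s \<notin> {1, 2}"
proof (cases "s \<le> t")
  case True
  have "sub n t s = t - s" unfolding sub_def using True t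
    by (metis Nat.add_diff_assoc2 less_imp_diff_less mod_add_self2 mod_less)
  then show ?thesis using t s True by (auto simp: SS_def)
next
  case False
  then have "t = 1" "s = 2" using t s by auto
  then have "sub n t s = n - 1" unfolding sub_def using n by simp
  then show ?thesis using n by auto
qed

lemma Xel_A: "Xel n lam m j \<in> A_space n SS m" if n: "n > 10"
  unfolding A_space_def
proof (intro CollectI allI impI)
  fix p assume ne: "Xel n lam m j p \<noteq> 0"
  then have p: "p \<noteq> []" "set p \<subseteq> {..<n}" "good m j (stp n p)" by (auto simp: Xel_def split: if_splits)
  have n0: "0 < n" using n by simp
  have h: "hd p < n" using p by (metis hd_in_set lessThan_iff subset_iff)
  have pe: "pth n (hd p) (stp n p) = p" by (rule pth_stp[OF p(2) p(1)])
  have "set (stp n p) \<subseteq> SS" using p(3) by (auto simp: good_def SS_def)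
  then have "allowed_path n SS (pth n (hd p) (stp n p))" using allowed_pth[OF n h stp_set[OF n0]] by blast
  moreover have "length p = Suc m" using p(3) pe pth_length[of n "hd p" "stp n p"] by (simp add: good_def)
  ultimately show "allowed_path n SS p \<and> length p = Suc m" using pe by simp
qed

lemma Xel_tau:
  fixes lam :: "'k::field"
  assumes n: "n > 10" and lam: "lam ^ n = 1"
  shows "tau_shift n (Xel n lam m j) = (\<lambda>q. lam * Xel n lam m j q)"
proof (rule ext)
  fix q
  have n0: "0 < n" using n by simp
  show "tau_shift n (Xel n lam m j) q = lam * Xel n lam m j q"
  proof (cases "set q \<subseteq> {..<n} \<and> q \<noteq> []")
    case False
    then show ?thesis by (auto simp: tau_shift_def Xel_def)
  next
    case True
    then have q: "set q \<subseteq> {..<n}" "q \<noteq> []" by auto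
    have h: "hd q < n" using q by (metis hd_in_set lessThan_iff subset_iff)
    have qe: "pth n (hd q) (stp n q) = q" by (rule pth_stp[OF q])
    have sl: "set (stp n q) \<subseteq> {..<n}" by (rule stp_set[OF n0])
    have "tau_shift n (Xel n lam m j) q = Xel n lam m j (pth n ((hd q + n - 1) mod n) (stp n q))"
      using q map_shift_pth[OF h, of "stp n q"] qe by (simp add: tau_shift_def)
    also have "\<dots> = inverse lam ^ ((hd q + n - 1) mod n) * W m j (stp n q)"
      by (rule Xel_pth[OF _ sl]) (use n0 in simp)
    also have "inverse lam ^ ((hd q + n - 1) mod n) = inverse lam ^ (hd q) * lam ^ 1"
      by (rule zeta_front[OF lam h]) (use n in simp)
    also have "Xel n lam m j q = inverse lam ^ (hd q) * W m j (stp n q)"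
      using Xel_pth[OF h sl] qe by metis
    ultimately show ?thesis by simp
  qed
qed

lemma W_spl0:
  assumes n: "n > 10" and t: "0 < t" "t < n" "t \<notin> SS"
  shows "spl n (W m j :: nat list \<Rightarrow> 'k::field) al t be = 0"
proof (cases "t = 3")
  case True
  have S: "1 \<in> SS" "2 \<in> SS" "(1::nat) \<noteq> 2" by (auto simp: SS_def)
  have "spl n (W m j :: nat list \<Rightarrow> 'k) al 3 be = W m j (al @ 1 # 2 # be) + W m j (al @ 2 # 1 # be)"
    by (rule spl_vals(4)[OF n W_supp])
  also have "\<dots> = 0"
  proof -
    have "(W m j (al @ 1 # 2 # be) :: 'k) = - W m j (al @ 2 # 1 # be)" by (rule R1_D[OF W_R1 S])
    then show ?thesis by simp
  qed
  finally show ?thesis using True by simp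
next
  case False
  have "(W m j (al @ s # sub n t s # be) :: 'k) = 0" if s: "s \<in> SS" for s
  proof (cases "s \<in> {1, 2}")
    case True
    then have "sub n t s \<notin> {1, 2}" using sub_not12[OF n t False] by blast
    then show ?thesis by (auto simp: W_def good_def)
  next
    case False
    then show ?thesis by (auto simp: W_def good_def)
  qed
  then show ?thesis unfolding spl_def by simp
qed

lemma Xel_Omega:
  fixes lam :: "'k::field"
  assumes n: "n > 10" and lam: "lam ^ n = 1" and m: "m \<ge> 2"
  shows "Xel n lam m j \<in> Omega_eig n SS m lam"
proof -
  let ?X = "Xel n lam m j"
  have n0: "0 < n" using n by simp
  have XA: "?X \<in> A_space n SS m" by (rule Xel_A[OF n])
  have "path_bd n ?X \<in> A_space n SS (m - 1)"
    unfolding A_space_def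
  proof (intro CollectI allI impI)
    fix q assume ne: "path_bd n ?X q \<noteq> 0"
    have sq: "set q \<subseteq> {..<n}" using ne path_bd_out by blast
    have lq: "length q = m" using ne path_bd_len[OF XA] by blast
    have rq: "regular_path q" using ne path_bd_formula[OF sq] by (metis (full_types))
    have qn: "q \<noteq> []" using lq m by auto
    have h: "hd q < n" using qn sq by (metis hd_in_set lessThan_iff subset_iff)
    let ?w = "stp n q"
    have qe: "pth n (hd q) ?w = q" by (rule pth_stp[OF sq qn])
    have wl: "\<forall>x\<in>set ?w. 0 < x \<and> x < n" using regular_stp[OF rq sq] stp_set[OF n0] by blast
    have "path_bd n ?X (pth n (hd q) ?w) = inverse lam ^ (hd q) * Dw n lam (W m j) ?w"
    proof (rule path_bd_word[OF n lam])
      show "\<And>w. (W m j w :: 'k) \<noteq> 0 \<Longrightarrow> set w \<subseteq> SS" using W_supp unfolding supp_def by blast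
      show "\<And>a w. a < n \<Longrightarrow> set w \<subseteq> {..<n} \<Longrightarrow> ?X (pth n a w) = inverse lam ^ a * W m j w"
        by (rule Xel_pth)
    qed (use h wl in auto)
    then have bd: "path_bd n ?X q = inverse lam ^ (hd q) * Dw n lam (W m j) ?w" using qe by simp
    have "set ?w \<subseteq> SS"
    proof (rule ccontr)
      assume "\<not> set ?w \<subseteq> SS"
      then obtain t where t: "t \<in> set ?w" "t \<notin> SS" by blast
      then obtain al be where w: "?w = al @ t # be" by (metis split_list)
      have "Dw n lam (W m j) ?w = (-1) ^ Suc (length al) * spl n (W m j :: nat list \<Rightarrow> 'k) al t be"
        unfolding w by (rule Dw_bad[OF W_supp t(2)])
      also have "spl n (W m j :: nat list \<Rightarrow> 'k) al t be = 0" using W_spl0[OF n _ _ t(2)] wl t(1) by blast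
      finally show False using bd ne by simp
    qed
    then have "allowed_path n SS q" using allowed_pth[OF n h stp_set[OF n0]] qe by metis
    then show "allowed_path n SS q \<and> length q = Suc (m - 1)" using lq m by simp
  qed
  then show ?thesis using XA Xel_tau[OF n lam] m by (simp add: Omega_eig_def Omega_space_def)
qed


lemma inv_sorted: "sorted w \<Longrightarrow> inv w = 0"
proof (induction w)
  case Nil then show ?case by simp
next
  case (Cons x w)
  then have "filter (\<lambda>y. y < x) w = []" by (auto simp: filter_empty_conv)
  then show ?case using Cons by simp
qed

lemma W_rep: "(W m j (rep a b k) :: 'k::field) = (if k = 0 \<and> a + b = m \<and> a = j then 1 else 0)"
proof -
  have s: "set (rep a b k) \<subseteq> {1, 2} \<longleftrightarrow> k = 0" by (cases k) (auto simp: rep_def)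
  have c: "count_list (rep a b k) 1 = a" by (simp add: rep_def count_list_replicate)
  have i: "inv (rep a b k) = 0" by (rule inv_sorted[OF rep_sorted])
  show ?thesis unfolding W_def good_def sg_def using s c i by auto
qed

lemma Uw_Xel:
  fixes lam :: "'k::field"
  assumes n: "n > 10"
  shows "Uw n m (Xel n lam m j) = W m j"
proof (rule ext)
  fix w
  have n0: "0 < n" using n by simp
  show "Uw n m (Xel n lam m j) w = W m j w"
  proof (cases "set w \<subseteq> SS \<and> length w = m")
    case True
    then have "set w \<subseteq> {..<n}" using SS_lt[OF n] by blast
    then show ?thesis using True Xel_pth[OF n0, of w lam m j] by (simp add: Uw_def)
  next
    case False
    then have "(W m j w :: 'k) = 0" by (auto simp: W_def good_def SS_def)
    then show ?thesis using False unfolding Uw_def by auto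
  qed
qed

lemma Xel_val:
  fixes lam :: "'k::field"
  assumes n: "n > 10" and lam: "lam ^ n = 1" and m: "m \<ge> 2" and k: "k \<le> 1"
  shows "path_bd n (Xel n lam m j) (pth n 0 (rep a b k)) = Z lam (\<lambda>a b k. W m j (rep a b k)) a b k"
proof -
  have n0: "0 < n" using n by simp
  have al: "allowed_path n SS (pth n 0 (rep a b k))" using allowed_pth[OF n n0 rep_lt[OF n]] rep_SS by blast
  have ux: "Uw n m (Xel n lam m j) = W m j" by (rule Uw_Xel[OF n])
  have "path_bd n (Xel n lam m j) (pth n 0 (rep a b k)) = Dw n lam (W m j) (rep a b k)"
    using bd_val[OF n lam Xel_Omega[OF n lam m] al] stp_pth[OF n0 rep_lt[OF n]] ux by simp
  also have "\<dots> = Z lam (\<lambda>a b k. W m j (rep a b k)) a b k"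
    by (rule Dw_rep[OF n W_supp W_R1 W_R2 k])
  finally show ?thesis .
qed

lemma Xel_val1:
  fixes lam :: "'k::field"
  assumes n: "n > 10" and lam: "lam ^ n = 1" and m: "m \<ge> 2" and a: "a \<le> m - 2"
  shows "path_bd n (Xel n lam m j) (pth n 0 (rep a (m - 2 - a) 1)) = (if a = j then - ((-1) ^ (m - 2)) else 0)"
proof -
  obtain b where b: "m = a + b + 2" using a m by (metis add.commute add_diff_inverse_nat le_add_diff_inverse2 le_diff_conv2 nat_le_linear not_less_eq_eq)
  have mb: "m - 2 - a = b" using b by simp
  have "path_bd n (Xel n lam m j) (pth n 0 (rep a b 1)) = Z lam (\<lambda>a b k. W m j (rep a b k)) a b 1"
    by (rule Xel_val[OF n lam m]) simp
  also have "\<dots> = (if a = j then - ((-1) ^ (a + b)) else 0)"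
    unfolding Z_def W_rep using b by auto
  finally show ?thesis using mb b by simp
qed

lemma Xel_val2:
  fixes lam :: "'k::field"
  assumes n: "n > 10" and lam: "lam ^ n = 1" and m: "m \<ge> 2"
  shows "path_bd n (Xel n lam m m) (pth n 0 (rep (m - 2) 1 0)) = - ((-1) ^ (m - 2))"
proof -
  obtain p where p: "m = p + 2" using m by (metis add.commute le_Suc_ex)
  have "path_bd n (Xel n lam m m) (pth n 0 (rep (m - 2) 1 0)) = Z lam (\<lambda>a b k. W m m (rep a b k)) (m - 2) 1 0"
    by (rule Xel_val[OF n lam m]) simp
  also have "\<dots> = - ((-1) ^ (m - 2))"
    unfolding Z_def W_rep using p by auto
  finally show ?thesis .
qed


theorem mainTheorem14:
  fixes n m :: nat and lam :: "'k::field_char_0"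
  assumes "n > 10"
    and "card {x::'k. x ^ n = 1} = n"
    and "m \<ge> 2"
    and "lam ^ n = 1"
  shows "vector_space.dim chain_scale (path_bd n ` Omega_eig n {1, 2, 4} m lam) = m"
proof -
  have n: "n > 10" and m: "m \<ge> 2" and lam: "lam ^ n = 1" using assms by auto
  let ?V = "path_bd n ` Omega_eig n SS m lam"
  let ?h = "\<lambda>j. path_bd n (Xel n lam m j)"
  let ?J = "{..m-2} \<union> {m}"
  let ?T = "?h ` ?J"
  let ?Qa = "\<lambda>a. pth n 0 (rep a (m - 2 - a) 1)"
  let ?Q' = "pth n 0 (rep (m - 2) 1 0)"
  define sig :: 'k where "sig = - ((-1) ^ (m - 2))"
  have sig0: "sig \<noteq> 0" by (simp add: sig_def)
  have hv1: "?h j (?Qa a) = (if a = j then sig else 0)" if "a \<le> m - 2" for a j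
    using Xel_val1[OF n lam m that, of j] by (simp add: sig_def)
  have hv2: "?h m ?Q' = sig" using Xel_val2[OF n lam m] by (simp add: sig_def)
  have injh: "inj_on ?h ?J"
  proof (rule inj_onI)
    fix j1 j2 assume j1: "j1 \<in> ?J" and j2: "j2 \<in> ?J" and e: "?h j1 = ?h j2"
    show "j1 = j2"
    proof (rule ccontr)
      assume ne: "j1 \<noteq> j2"
      then have "j1 \<le> m - 2 \<or> j2 \<le> m - 2" using j1 j2 by auto
      then show False
      proof
        assume a: "j1 \<le> m - 2"
        have "?h j1 (?Qa j1) = sig" using hv1[OF a] by simp
        moreover have "?h j2 (?Qa j1) = 0" using hv1[OF a, of j2] ne by simp
        ultimately show False using e sig0 by simp
      next
        assume a: "j2 \<le> m - 2"
        have "?h j2 (?Qa j2) = sig" using hv1[OF a] by simp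
        moreover have "?h j1 (?Qa j2) = 0" using hv1[OF a, of j1] ne by simp
        ultimately show False using e sig0 by simp
      qed
    qed
  qed
  have cardJ: "card ?J = m"
  proof -
    have "m \<notin> {..m-2}" using m by simp
    then have "card ?J = card {..m-2} + 1" by simp
    then show ?thesis using m by simp
  qed
  have TV: "?T \<subseteq> ?V" using Xel_Omega[OF n lam m] by blast
  have finT: "finite ?T" by simp
  have cardT: "card ?T = m" using card_image[OF injh] cardJ by simp
  have indT: "cs.independent ?T"
  proof (rule cs.independent_if_scalars_zero[OF finT])
    fix f x assume s: "(\<Sum>x\<in>?T. chain_scale (f x) x) = 0" and x: "x \<in> ?T"
    have s': "(\<Sum>j\<in>?J. chain_scale (f (?h j)) (?h j)) = 0"
      using s sum.reindex[OF injh, of "\<lambda>x. chain_scale (f x) x"] by simp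
    have ev: "(\<Sum>j\<in>?J. f (?h j) * ?h j P) = 0" for P
      using fun_cong[OF s', of P] by (simp add: sum_fun_apply)
    have z1: "f (?h a) = 0" if a: "a \<le> m - 2" for a
    proof -
      have "(\<Sum>j\<in>?J. f (?h j) * ?h j (?Qa a)) = (\<Sum>j\<in>?J. if j = a then f (?h a) * sig else 0)"
      proof (rule sum.cong[OF refl])
        fix j assume "j \<in> ?J"
        have "?h j (?Qa a) = (if a = j then sig else 0)" by (rule hv1[OF a])
        then show "f (?h j) * ?h j (?Qa a) = (if j = a then f (?h a) * sig else 0)" by auto
      qed
      also have "\<dots> = f (?h a) * sig" using a by (simp add: sum.delta)
      finally show ?thesis using ev[of "?Qa a"] sig0 by simp
    qed
    have z2: "f (?h m) = 0"
    proof -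
      have "(\<Sum>j\<in>?J. f (?h j) * ?h j ?Q') = (\<Sum>j\<in>?J. if j = m then f (?h m) * sig else 0)"
      proof (rule sum.cong[OF refl])
        fix j assume j: "j \<in> ?J"
        show "f (?h j) * ?h j ?Q' = (if j = m then f (?h m) * sig else 0)"
        proof (cases "j = m")
          case True then show ?thesis using hv2 by simp
        next
          case False then have "j \<le> m - 2" using j by auto
          then show ?thesis using z1 False by simp
        qed
      qed
      also have "\<dots> = f (?h m) * sig" by (simp add: sum.delta)
      finally show ?thesis using ev[of ?Q'] sig0 by simp
    qed
    from x obtain j where "j \<in> ?J" "x = ?h j" by blast
    then show "f x = 0" using z1 z2 by auto
  qed
  have "cs.dim ?V = m"
  proof (rule dim_by_points[OF image_subspace Qset_finite Qset_card[OF m]])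
    show "\<And>v. v \<in> ?V \<Longrightarrow> (\<forall>q\<in>Qset n m. v q = 0) \<Longrightarrow> v = 0"
      using upper_inj[OF n lam m] by blast
  qed (use TV indT finT cardT in auto)
  then show ?thesis by (simp add: SS_def)
qed


end
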